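(* Let $H$ be a real separable Hilbert space, $k,q\in\mathbb{N}$ and $n=k+q$. Then, inside $H^{\otimes n}$, \[ H^{\odot[k],\wedge[q]}=\big(H^{\odot[k],\wedge[q]}\cap H^{\odot[k+1],\wedge[q-1]}\big)\oplus\big(H^{\odot[k],\wedge[q]}\cap H^{\odot[k-1],\wedge[q+1]}\big). \]
   Context: $H^{\otimes n}$ is the Hilbert-space completed $n$-th tensor power of $H$. For integers $m,p\ge0$ with $m+p=n$, $H^{\odot[m],\wedge[p]}$ denotes the closed linear span of all elements of $H^{\otimes n}$ that are symmetric in some set of $m$ tensor positions and skew-symmetric in the remaining $p$ positions (the set of positions ranges over all $m$-element subsets of $\{1,\dots,n\}$). If $m$ or $p$ is negative, $H^{\odot[m],\wedge[p]}$ is taken to be $\{0\}$. *)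

theory Defs
  imports "HOL-Analysis.Analysis" "HOL-Combinatorics.Permutations"
begin

text \<open>
  Model of the Hilbert tensor power H^(tensor n) of a real Hilbert space H:
  the Hilbert space of Hilbert--Schmidt n-linear forms on H (canonically
  isometric to the Hilbert-space completed tensor power; the elementary tensor
  x_1 (x) ... (x) x_n corresponds to the form (y_1,...,y_n) |-> prod <x_i,y_i>).
  Permuting tensor positions corresponds to permuting the arguments.
\<close>

definition onb :: "'a::real_inner set \<Rightarrow> bool" where
  "onb B \<longleftrightarrow> (\<forall>x\<in>B. norm x = 1) \<and> (\<forall>x\<in>B. \<forall>y\<in>B. x \<noteq> y \<longrightarrow> inner x y = 0)
              \<and> closure (span B) = UNIV"

definition the_onb :: "'a::real_inner set" where
  "the_onb = (SOME B. onb B)"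

definition tuples :: "'a set \<Rightarrow> nat \<Rightarrow> 'a list set" where
  "tuples B n = {xs. set xs \<subseteq> B \<and> length xs = n}"

definition tensor_power :: "nat \<Rightarrow> ('a::real_inner list \<Rightarrow> real) set" where
  "tensor_power n = {T.
     (\<forall>xs. length xs \<noteq> n \<longrightarrow> T xs = 0)
   \<and> (\<forall>xs i. length xs = n \<longrightarrow> i < n \<longrightarrow> linear (\<lambda>x. T (xs[i := x])))
   \<and> (\<exists>C. \<forall>xs. length xs = n \<longrightarrow> \<bar>T xs\<bar> \<le> C * (\<Prod>x\<leftarrow>xs. norm x))
   \<and> (\<lambda>e. (T e)\<^sup>2) summable_on tuples the_onb n}"

text \<open>Hilbert--Schmidt inner product and norm (independent of the orthonormal basis).\<close>
definition tinner :: "nat \<Rightarrow> ('a::real_inner list \<Rightarrow> real) \<Rightarrow> ('a list \<Rightarrow> real) \<Rightarrow> real" where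
  "tinner n S T = (\<Sum>\<^sub>\<infinity>e\<in>tuples the_onb n. S e * T e)"

definition tnorm :: "nat \<Rightarrow> ('a::real_inner list \<Rightarrow> real) \<Rightarrow> real" where
  "tnorm n T = sqrt (tinner n T T)"

definition lin_span :: "('a list \<Rightarrow> real) set \<Rightarrow> ('a list \<Rightarrow> real) set" where
  "lin_span X = {(\<lambda>xs. \<Sum>i<m. c i * f i xs) | (m::nat) (c::nat \<Rightarrow> real) f. \<forall>i<m. f i \<in> X}"

definition closed_span :: "nat \<Rightarrow> ('a::real_inner list \<Rightarrow> real) set \<Rightarrow> ('a list \<Rightarrow> real) set" where
  "closed_span n X = {T \<in> tensor_power n.
      \<forall>\<epsilon>>0. \<exists>S\<in>lin_span X. tnorm n (\<lambda>xs. T xs - S xs) < \<epsilon>}"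

definition sym_skew_in :: "nat \<Rightarrow> nat set \<Rightarrow> ('a list \<Rightarrow> real) \<Rightarrow> bool" where
  "sym_skew_in n S T \<longleftrightarrow>
     (\<forall>\<sigma> xs. \<sigma> permutes S \<longrightarrow> length xs = n \<longrightarrow> T (permute_list \<sigma> xs) = T xs)
   \<and> (\<forall>\<sigma> xs. \<sigma> permutes ({0..<n} - S) \<longrightarrow> length xs = n \<longrightarrow>
          T (permute_list \<sigma> xs) = of_int (sign \<sigma>) * T xs)"

text \<open>H^{odot[m], wedge[p]} inside H^(tensor (m+p)); {0} if m or p is negative.\<close>
definition sym_skew_space :: "int \<Rightarrow> int \<Rightarrow> ('a::real_inner list \<Rightarrow> real) set" where
  "sym_skew_space m p =
     (if m < 0 \<or> p < 0 then {\<lambda>_. 0}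
      else (let n = nat (m + p) in
        closed_span n (\<Union>S\<in>{S. S \<subseteq> {0..<n} \<and> card S = nat m}.
                        {T \<in> tensor_power n. sym_skew_in n S T})))"

end

theory Submission
  imports Defs
begin



definition act :: "(nat \<Rightarrow> nat) \<Rightarrow> ('a list \<Rightarrow> real) \<Rightarrow> ('a list \<Rightarrow> real)" where
  "act \<sigma> T = (\<lambda>xs. T (permute_list \<sigma> xs))"

lemma permute_list_update:
  assumes "\<sigma> permutes {0..<n}" "length xs = n" "i < n"
  shows "permute_list \<sigma> (xs[i := x]) = (permute_list \<sigma> xs)[inv \<sigma> i := x]"
proof (rule nth_equalityI)
  have p: "\<sigma> permutes {..<length xs}" using assms by (simp add: atLeast0LessThan)
  have p': "\<sigma> permutes {..<length (xs[i:=x])}" using assms by (simp add: atLeast0LessThan)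
  show "length (permute_list \<sigma> (xs[i := x])) = length ((permute_list \<sigma> xs)[inv \<sigma> i := x])" by simp
  fix j assume j: "j < length (permute_list \<sigma> (xs[i := x]))"
  hence jn: "j < n" using assms by simp
  have sj: "\<sigma> j < n" using permutes_in_image[OF assms(1)] jn by simp
  have eq: "\<sigma> j = i \<longleftrightarrow> j = inv \<sigma> i"
    using permutes_inverses[OF assms(1)] by metis
  show "permute_list \<sigma> (xs[i := x]) ! j = (permute_list \<sigma> xs)[inv \<sigma> i := x] ! j"
    using permute_list_nth[OF p', of j] permute_list_nth[OF p, of j] jn sj assms eq
    by (auto simp: nth_list_update)
qed

lemma permute_list_compose':
  assumes "g permutes {0..<n}" "length xs = n"
  shows "permute_list (f \<circ> g) xs = permute_list g (permute_list f xs)"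
  using permute_list_compose[of g xs f] assms by (simp add: atLeast0LessThan)

lemma permute_list_inv:
  assumes "\<sigma> permutes {0..<n}" "length xs = n"
  shows "permute_list (inv \<sigma>) (permute_list \<sigma> xs) = xs"
    "permute_list \<sigma> (permute_list (inv \<sigma>) xs) = xs"
proof -
  have i: "inv \<sigma> permutes {0..<n}" using permutes_inv[OF assms(1)] .
  have "permute_list (inv \<sigma>) (permute_list \<sigma> xs) = permute_list (\<sigma> \<circ> inv \<sigma>) xs"
    using permute_list_compose'[OF i assms(2)] by simp
  also have "\<sigma> \<circ> inv \<sigma> = id" using permutes_inverses[OF assms(1)] by (auto simp: fun_eq_iff)
  finally show "permute_list (inv \<sigma>) (permute_list \<sigma> xs) = xs" by simp
  have "permute_list \<sigma> (permute_list (inv \<sigma>) xs) = permute_list (inv \<sigma> \<circ> \<sigma>) xs"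
    using permute_list_compose'[OF assms] by simp
  also have "inv \<sigma> \<circ> \<sigma> = id" using permutes_inverses[OF assms(1)] by (auto simp: fun_eq_iff)
  finally show "permute_list \<sigma> (permute_list (inv \<sigma>) xs) = xs" by simp
qed

lemma bij_permute_tuples:
  assumes "\<sigma> permutes {0..<n}"
  shows "bij_betw (permute_list \<sigma>) (tuples B n) (tuples B n)"
proof (rule bij_betw_byWitness[where f'="permute_list (inv \<sigma>)"])
  have i: "inv \<sigma> permutes {0..<n}" using permutes_inv[OF assms(1)] .
  show "\<forall>a\<in>tuples B n. permute_list (inv \<sigma>) (permute_list \<sigma> a) = a"
    using permute_list_inv[OF assms] by (auto simp: tuples_def)
  show "\<forall>a'\<in>tuples B n. permute_list \<sigma> (permute_list (inv \<sigma>) a') = a'"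
    using permute_list_inv[OF assms] by (auto simp: tuples_def)
  show "permute_list \<sigma> ` tuples B n \<subseteq> tuples B n"
    using assms by (auto simp: tuples_def atLeast0LessThan)
  show "permute_list (inv \<sigma>) ` tuples B n \<subseteq> tuples B n"
    using i by (auto simp: tuples_def atLeast0LessThan)
qed

lemma prod_permute_list:
  fixes f :: "'a \<Rightarrow> 'b::comm_monoid_mult"
  assumes "\<sigma> permutes {0..<n}" "length xs = n"
  shows "(\<Prod>x\<leftarrow>permute_list \<sigma> xs. f x) = (\<Prod>x\<leftarrow>xs. f x)"
proof -
  have p: "\<sigma> permutes {..<length xs}" using assms by (simp add: atLeast0LessThan)
  have "(\<Prod>x\<leftarrow>permute_list \<sigma> xs. f x) = prod_list (permute_list \<sigma> (map f xs))"
    using permute_list_map[OF p, of f] by simp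
  also have "\<dots> = prod_mset (mset (permute_list \<sigma> (map f xs)))" by (simp add: prod_mset_prod_list)
  also have "\<dots> = prod_mset (mset (map f xs))" using p by (subst mset_permute_list) auto
  finally show ?thesis by (metis mset_map prod_mset_prod_list)
qed


subsection \<open>Closure properties of the tensor power\<close>

lemma tpD:
  assumes "T \<in> tensor_power n"
  shows "\<And>xs. length xs \<noteq> n \<Longrightarrow> T xs = 0"
    and "\<And>xs i. length xs = n \<Longrightarrow> i < n \<Longrightarrow> linear (\<lambda>x. T (xs[i := x]))"
    and "\<exists>C. \<forall>xs. length xs = n \<longrightarrow> \<bar>T xs\<bar> \<le> C * (\<Prod>x\<leftarrow>xs. norm x)"
    and "(\<lambda>e. (T e)\<^sup>2) summable_on tuples the_onb n"
  using assms unfolding tensor_power_def by auto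

lemma prod_norm_nonneg: "0 \<le> (\<Prod>x\<leftarrow>xs. norm (x::'a::real_normed_vector))"
  by (rule prod_list_nonneg) auto

lemma tp_zero: "(\<lambda>_. 0) \<in> tensor_power n"
  unfolding tensor_power_def by (auto intro!: exI[of _ 0] simp: linear_iff)

lemma tp_add:
  assumes S: "S \<in> tensor_power n" and T: "T \<in> tensor_power n"
  shows "(\<lambda>xs. S xs + T xs) \<in> tensor_power n"
proof -
  obtain C1 where C1: "\<forall>xs. length xs = n \<longrightarrow> \<bar>S xs\<bar> \<le> C1 * (\<Prod>x\<leftarrow>xs. norm x)"
    using tpD(3)[OF S] by blast
  obtain C2 where C2: "\<forall>xs. length xs = n \<longrightarrow> \<bar>T xs\<bar> \<le> C2 * (\<Prod>x\<leftarrow>xs. norm x)"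
    using tpD(3)[OF T] by blast
  have lin: "linear (\<lambda>x. S (xs[i := x]) + T (xs[i := x]))" if "length xs = n" "i < n" for xs i
    using tpD(2)[OF S that] tpD(2)[OF T that] unfolding linear_iff by (simp add: algebra_simps)
  have bnd: "\<forall>xs. length xs = n \<longrightarrow> \<bar>S xs + T xs\<bar> \<le> (C1 + C2) * (\<Prod>x\<leftarrow>xs. norm x)"
  proof (intro allI impI)
    fix xs :: "'a list" assume "length xs = n"
    hence "\<bar>S xs\<bar> \<le> C1 * (\<Prod>x\<leftarrow>xs. norm x)" "\<bar>T xs\<bar> \<le> C2 * (\<Prod>x\<leftarrow>xs. norm x)" using C1 C2 by auto
    thus "\<bar>S xs + T xs\<bar> \<le> (C1 + C2) * (\<Prod>x\<leftarrow>xs. norm x)" by (simp add: algebra_simps)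
  qed
  have sm: "(\<lambda>e. (S e + T e)\<^sup>2) summable_on tuples the_onb n"
  proof (rule summable_on_comparison_test)
    show "(\<lambda>e. 2 * (S e)\<^sup>2 + 2 * (T e)\<^sup>2) summable_on tuples the_onb n"
      by (intro summable_on_add summable_on_cmult_right tpD(4) S T)
    show "(S e + T e)\<^sup>2 \<le> 2 * (S e)\<^sup>2 + 2 * (T e)\<^sup>2" for e
      using power2_sum[of "S e" "T e"] power2_diff[of "S e" "T e"] zero_le_power2[of "S e - T e"]
      by linarith
    show "0 \<le> (S e + T e)\<^sup>2" for e by simp
  qed
  show ?thesis unfolding tensor_power_def
    using tpD(1)[OF S] tpD(1)[OF T] lin bnd sm by auto
qed

lemma tp_scale:
  assumes T: "T \<in> tensor_power n"
  shows "(\<lambda>xs. c * T xs) \<in> tensor_power n"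
proof -
  obtain C where C: "\<forall>xs. length xs = n \<longrightarrow> \<bar>T xs\<bar> \<le> C * (\<Prod>x\<leftarrow>xs. norm x)"
    using tpD(3)[OF T] by blast
  have lin: "linear (\<lambda>x. c * T (xs[i := x]))" if "length xs = n" "i < n" for xs i
    using tpD(2)[OF T that] unfolding linear_iff by (simp add: algebra_simps)
  have bnd: "\<forall>xs. length xs = n \<longrightarrow> \<bar>c * T xs\<bar> \<le> (\<bar>c\<bar> * C) * (\<Prod>x\<leftarrow>xs. norm x)"
    using C by (auto simp: abs_mult mult.assoc intro!: mult_left_mono)
  have sm: "(\<lambda>e. (c * T e)\<^sup>2) summable_on tuples the_onb n"
    using summable_on_cmult_right[OF tpD(4)[OF T], of "c\<^sup>2"] by (simp add: power_mult_distrib)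
  show ?thesis unfolding tensor_power_def
    using tpD(1)[OF T] lin bnd sm by auto
qed

lemma tp_diff:
  assumes S: "S \<in> tensor_power n" and T: "T \<in> tensor_power n"
  shows "(\<lambda>xs. S xs - T xs) \<in> tensor_power n"
  using tp_add[OF S tp_scale[OF T, of "-1"]] by simp

lemma tp_sum:
  assumes "\<And>i. i \<in> I \<Longrightarrow> f i \<in> tensor_power n"
  shows "(\<lambda>xs. \<Sum>i\<in>I. f i xs) \<in> tensor_power n"
proof (cases "finite I")
  case True
  then show ?thesis using assms
  proof (induction I rule: finite_induct)
    case empty then show ?case using tp_zero by simp
  next
    case (insert x F)
    then show ?case using tp_add[of "f x" n "\<lambda>xs. \<Sum>i\<in>F. f i xs"] by simp
  qed
next
  case False then show ?thesis using tp_zero by simp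
qed

lemma tp_act:
  assumes T: "T \<in> tensor_power n" and \<sigma>: "\<sigma> permutes {0..<n}"
  shows "act \<sigma> T \<in> tensor_power n"
proof -
  obtain C where C: "\<forall>xs. length xs = n \<longrightarrow> \<bar>T xs\<bar> \<le> C * (\<Prod>x\<leftarrow>xs. norm x)"
    using tpD(3)[OF T] by blast
  have lin: "linear (\<lambda>x. act \<sigma> T (xs[i := x]))" if "length xs = n" "i < n" for xs i
  proof -
    have "inv \<sigma> i < n" using permutes_in_image[OF permutes_inv[OF \<sigma>]] that by simp
    moreover have "(\<lambda>x. act \<sigma> T (xs[i := x])) = (\<lambda>x. T ((permute_list \<sigma> xs)[inv \<sigma> i := x]))"
      using permute_list_update[OF \<sigma> that] by (simp add: act_def)
    ultimately show ?thesis using tpD(2)[OF T, of "permute_list \<sigma> xs" "inv \<sigma> i"] that by simp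
  qed
  have bnd: "\<forall>xs. length xs = n \<longrightarrow> \<bar>act \<sigma> T xs\<bar> \<le> C * (\<Prod>x\<leftarrow>xs. norm x)"
  proof (intro allI impI)
    fix xs :: "'a list" assume l: "length xs = n"
    have "\<bar>T (permute_list \<sigma> xs)\<bar> \<le> C * (\<Prod>x\<leftarrow>permute_list \<sigma> xs. norm x)" using C[rule_format, of "permute_list \<sigma> xs"] l by (simp only: length_permute_list)
    also have "(\<Prod>x\<leftarrow>permute_list \<sigma> xs. norm x) = (\<Prod>x\<leftarrow>xs. norm x)" using prod_permute_list[OF \<sigma> l] .
    finally show "\<bar>act \<sigma> T xs\<bar> \<le> C * (\<Prod>x\<leftarrow>xs. norm x)" by (simp add: act_def)
  qed
  have sm: "(\<lambda>e. (act \<sigma> T e)\<^sup>2) summable_on tuples the_onb n"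
    using summable_on_reindex_bij_betw[OF bij_permute_tuples[OF \<sigma>], of "\<lambda>e. (T e)\<^sup>2"] tpD(4)[OF T]
    by (simp add: act_def)
  show ?thesis unfolding tensor_power_def
    using tpD(1)[OF T] lin bnd sm by (auto simp: act_def)
qed




lemma sq_sum_le: "((a::real) + b) * (a + b) \<le> 2 * (a * a) + 2 * (b * b)"
proof -
  have "(a+b)^2 \<le> 2*a^2 + 2*b^2"
    using power2_sum[of a b] power2_diff[of a b] zero_le_power2[of "a-b"] by linarith
  thus ?thesis by (simp add: power2_eq_square)
qed

definition tq :: "nat \<Rightarrow> ('a::real_inner list \<Rightarrow> real) \<Rightarrow> real" where
  "tq n T = tinner n T T"

lemma sq_summ: "T \<in> tensor_power n \<Longrightarrow> (\<lambda>e. T e * T e) summable_on tuples the_onb n"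
  using tpD(4) by (simp add: power2_eq_square)

lemma prod_summable:
  assumes S: "S \<in> tensor_power n" and T: "T \<in> tensor_power n"
  shows "(\<lambda>e. S e * T e) summable_on tuples the_onb n"
proof -
  have g: "(\<lambda>e. (S e)\<^sup>2 + (T e)\<^sup>2) summable_on tuples the_onb n"
    by (intro summable_on_add tpD(4) S T)
  hence "(\<lambda>e. norm ((S e)\<^sup>2 + (T e)\<^sup>2)) summable_on tuples the_onb n"
    by (rule summable_on_iff_abs_summable_on_real[THEN iffD1])
  moreover have "norm (S e * T e) \<le> norm ((S e)\<^sup>2 + (T e)\<^sup>2)" for e
  proof -
    have a: "0 \<le> (\<bar>S e\<bar> - \<bar>T e\<bar>)\<^sup>2" by (rule zero_le_power2)
    have b: "(\<bar>S e\<bar> - \<bar>T e\<bar>)\<^sup>2 = \<bar>S e\<bar>\<^sup>2 + \<bar>T e\<bar>\<^sup>2 - 2 * \<bar>S e\<bar> * \<bar>T e\<bar>"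
      by (rule power2_diff)
    have c: "\<bar>S e\<bar>\<^sup>2 = (S e)\<^sup>2" "\<bar>T e\<bar>\<^sup>2 = (T e)\<^sup>2" by (rule power2_abs)+
    have d: "0 \<le> \<bar>S e\<bar> * \<bar>T e\<bar>" by (rule mult_nonneg_nonneg) simp_all
    have e: "norm (S e * T e) = \<bar>S e\<bar> * \<bar>T e\<bar>" by (simp only: real_norm_def abs_mult)
    have f: "norm ((S e)\<^sup>2 + (T e)\<^sup>2) = (S e)\<^sup>2 + (T e)\<^sup>2"
      by (simp only: real_norm_def) (rule abs_of_nonneg, simp)
    show ?thesis unfolding e f using a b c d by linarith
  qed
  ultimately have "(\<lambda>e. norm (S e * T e)) summable_on tuples the_onb n"
    by (rule Infinite_Sum.abs_summable_on_comparison_test)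
  thus ?thesis by (rule summable_on_iff_abs_summable_on_real[THEN iffD2])
qed

lemma tinner_comm: "tinner n S T = tinner n T S"
  unfolding tinner_def by (simp add: mult.commute)

lemma tinner_add_left:
  assumes "S \<in> tensor_power n" "T \<in> tensor_power n" "U \<in> tensor_power n"
  shows "tinner n (\<lambda>xs. S xs + T xs) U = tinner n S U + tinner n T U"
  unfolding tinner_def
  using infsum_add[OF prod_summable[OF assms(1,3)] prod_summable[OF assms(2,3)]]
  by (simp add: distrib_right)

lemma tinner_scale_left:
  "tinner n (\<lambda>xs. c * S xs) U = c * tinner n S U"
  unfolding tinner_def
proof -
  have "(\<Sum>\<^sub>\<infinity>e\<in>tuples the_onb n. c * S e * U e) = (\<Sum>\<^sub>\<infinity>e\<in>tuples the_onb n. c * (S e * U e))"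
    by (simp add: mult.assoc)
  also have "\<dots> = c * (\<Sum>\<^sub>\<infinity>e\<in>tuples the_onb n. S e * U e)"
    by (rule infsum_cmult_right') 
  finally show "(\<Sum>\<^sub>\<infinity>e\<in>tuples the_onb n. c * S e * U e) = c * (\<Sum>\<^sub>\<infinity>e\<in>tuples the_onb n. S e * U e)" .
qed

lemma tinner_zero_left: "tinner n (\<lambda>_. 0) U = 0"
  unfolding tinner_def by simp

lemma tinner_act:
  assumes "\<sigma> permutes {0..<n}"
  shows "tinner n (act \<sigma> S) (act \<sigma> T) = tinner n S T"
  unfolding tinner_def act_def
  using infsum_reindex_bij_betw[OF bij_permute_tuples[OF assms], of "\<lambda>e. S e * T e"] by simp

lemma tq_nonneg: "0 \<le> tq n T"
  unfolding tq_def tinner_def by (rule infsum_nonneg) simp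

lemma tq_act: "\<sigma> permutes {0..<n} \<Longrightarrow> tq n (act \<sigma> T) = tq n T"
  unfolding tq_def by (rule tinner_act)

lemma tq_scale: "tq n (\<lambda>xs. c * T xs) = c\<^sup>2 * tq n T"
proof -
  have "tinner n (\<lambda>xs. c * T xs) (\<lambda>xs. c * T xs) = c * tinner n T (\<lambda>xs. c * T xs)"
    by (rule tinner_scale_left)
  also have "tinner n T (\<lambda>xs. c * T xs) = tinner n (\<lambda>xs. c * T xs) T" by (rule tinner_comm)
  also have "\<dots> = c * tinner n T T" by (rule tinner_scale_left)
  finally show ?thesis unfolding tq_def by (simp add: power2_eq_square)
qed

lemma tq_add_le:
  assumes S: "S \<in> tensor_power n" and T: "T \<in> tensor_power n"
  shows "tq n (\<lambda>xs. S xs + T xs) \<le> 2 * tq n S + 2 * tq n T"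
proof -
  have "tq n (\<lambda>xs. S xs + T xs) \<le> (\<Sum>\<^sub>\<infinity>e\<in>tuples the_onb n. 2 * (S e * S e) + 2 * (T e * T e))"
    unfolding tq_def tinner_def
  proof (rule infsum_mono)
    show "(\<lambda>e. (S e + T e) * (S e + T e)) summable_on tuples the_onb n"
      using sq_summ[OF tp_add[OF S T]] by simp
    show "(\<lambda>e. 2 * (S e * S e) + 2 * (T e * T e)) summable_on tuples the_onb n"
      by (intro summable_on_add summable_on_cmult_right sq_summ S T)
    show "(S e + T e) * (S e + T e) \<le> 2 * (S e * S e) + 2 * (T e * T e)" for e
      by (rule sq_sum_le)
  qed
  also have "\<dots> = 2 * tq n S + 2 * tq n T"
  proof -
    have a: "(\<lambda>e. 2 * (S e * S e)) summable_on tuples the_onb n" by (intro summable_on_cmult_right sq_summ S)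
    have b: "(\<lambda>e. 2 * (T e * T e)) summable_on tuples the_onb n" by (intro summable_on_cmult_right sq_summ T)
    show ?thesis unfolding tq_def tinner_def
      by (subst infsum_add[OF a b], subst infsum_cmult_right', subst infsum_cmult_right', rule refl)
  qed
  finally show ?thesis .
qed

lemma half_le: "2 * (y::real) \<le> X \<Longrightarrow> x \<le> y \<Longrightarrow> x \<le> X / 2" by linarith

lemma tinner_bound:
  assumes S: "S \<in> tensor_power n" and T: "T \<in> tensor_power n" and c: "c > 0"
  shows "\<bar>tinner n S T\<bar> \<le> (c * tq n S + tq n T / c) / 2"
proof -
  have pw: "2 * \<bar>a * b\<bar> \<le> c * (a * a) + (b * b) / c" for a b :: real
  proof -
    have "0 \<le> (c * \<bar>a\<bar> - \<bar>b\<bar>)\<^sup>2" by simp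
    hence "2 * c * \<bar>a * b\<bar> \<le> c * (c * (a * a)) + b * b"
      by (simp add: power2_diff power2_eq_square abs_mult algebra_simps)
    hence "c * (2 * \<bar>a * b\<bar>) \<le> c * (c * (a * a) + (b * b) / c)"
      using c by (simp add: algebra_simps)
    thus ?thesis using c by simp
  qed
  have s1: "(\<lambda>e. (c * (S e * S e) + (T e * T e) / c) / 2) summable_on tuples the_onb n"
  proof -
    have "(\<lambda>e. (1/2) * (c * (S e * S e) + (1/c) * (T e * T e))) summable_on tuples the_onb n"
      by (intro summable_on_cmult_right summable_on_add sq_summ S T)
    moreover have "(\<lambda>e. (1/2) * (c * (S e * S e) + (1/c) * (T e * T e))) = (\<lambda>e. (c * (S e * S e) + (T e * T e) / c) / 2)"
      by (auto simp: fun_eq_iff)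
    ultimately show ?thesis by simp
  qed
  have i: "(\<Sum>\<^sub>\<infinity>e\<in>tuples the_onb n. (c * (S e * S e) + (T e * T e) / c) / 2) = (c * tq n S + tq n T / c) / 2"
  proof -
    have "(\<Sum>\<^sub>\<infinity>e\<in>tuples the_onb n. (c * (S e * S e) + (T e * T e) / c) / 2)
        = (\<Sum>\<^sub>\<infinity>e\<in>tuples the_onb n. (1/2) * (c * (S e * S e) + (1/c) * (T e * T e)))"
      by (rule infsum_cong) (simp add: field_simps)
    also have "\<dots> = (1/2) * ((\<Sum>\<^sub>\<infinity>e\<in>tuples the_onb n. c * (S e * S e)) + (\<Sum>\<^sub>\<infinity>e\<in>tuples the_onb n. (1/c) * (T e * T e)))"
    proof -
      have sS: "(\<lambda>e. c * (S e * S e)) summable_on tuples the_onb n" by (intro summable_on_cmult_right sq_summ S)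
      have sT: "(\<lambda>e. (1/c) * (T e * T e)) summable_on tuples the_onb n" by (intro summable_on_cmult_right sq_summ T)
      show ?thesis by (subst infsum_cmult_right', subst infsum_add[OF sS sT], rule refl)
    qed
    also have "\<dots> = (c * tq n S + tq n T / c) / 2"
      unfolding tq_def tinner_def
      by (subst infsum_cmult_right', subst infsum_cmult_right', simp)
    finally show ?thesis .
  qed
  have pw1: "a * b \<le> (c * (a * a) + (b * b) / c) / 2" for a b :: real
    using half_le[OF pw[of a b] abs_ge_self[of "a*b"]] .
  have pw2: "- (a * b) \<le> (c * (a * a) + (b * b) / c) / 2" for a b :: real
    using half_le[OF pw[of a b] abs_ge_minus_self[of "a*b"]] .
  have "tinner n S T \<le> (c * tq n S + tq n T / c) / 2"
    unfolding i[symmetric] tinner_def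
    by (rule infsum_mono[OF prod_summable[OF S T] s1]) (rule pw1)
  moreover have "- tinner n S T \<le> (c * tq n S + tq n T / c) / 2"
  proof -
    have "- tinner n S T = (\<Sum>\<^sub>\<infinity>e\<in>tuples the_onb n. - (S e * T e))"
      unfolding tinner_def by (rule infsum_uminus[symmetric])
    also have "\<dots> \<le> (\<Sum>\<^sub>\<infinity>e\<in>tuples the_onb n. (c * (S e * S e) + (T e * T e) / c) / 2)"
      by (rule infsum_mono[OF summable_on_uminus[THEN iffD2, OF prod_summable[OF S T]] s1]) (rule pw2)
    finally show ?thesis unfolding i .
  qed
  ultimately show ?thesis by linarith
qed




lemma ls_zero: "(\<lambda>_. 0) \<in> lin_span X"
  unfolding lin_span_def by (auto intro!: exI[of _ "0::nat"])

lemma ls_base: "f \<in> X \<Longrightarrow> f \<in> lin_span X"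
  unfolding lin_span_def by (auto intro!: exI[of _ "1::nat"] exI[of _ "\<lambda>_. 1"] exI[of _ "\<lambda>_. f"])

lemma ls_add1:
  assumes F: "F \<in> lin_span X" and g: "g \<in> X"
  shows "(\<lambda>xs. F xs + a * g xs) \<in> lin_span X"
proof -
  obtain m :: nat and c f where F': "F = (\<lambda>xs. \<Sum>i<m. c i * f i xs)" and f: "\<forall>i<m. f i \<in> X"
    using F unfolding lin_span_def by blast
  have "(\<lambda>xs. F xs + a * g xs) = (\<lambda>xs. \<Sum>i<Suc m. (c(m:=a)) i * (f(m:=g)) i xs)"
    unfolding F' by (auto simp: fun_eq_iff intro!: sum.cong)
  moreover have "\<forall>i<Suc m. (f(m:=g)) i \<in> X" using f g by (auto simp: less_Suc_eq)
  ultimately show ?thesis unfolding lin_span_def by blast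
qed

lemma ls_induct [consumes 1, case_names zero step]:
  assumes F: "F \<in> lin_span X"
    and z: "P (\<lambda>_. 0)"
    and s: "\<And>F g a. F \<in> lin_span X \<Longrightarrow> g \<in> X \<Longrightarrow> P F \<Longrightarrow> P (\<lambda>xs. F xs + a * g xs)"
  shows "P F"
proof -
  obtain m :: nat and c f where F': "F = (\<lambda>xs. \<Sum>i<m. c i * f i xs)" and f: "\<forall>i<m. f i \<in> X"
    using F unfolding lin_span_def by blast
  have "\<forall>k\<le>m. (\<lambda>xs. \<Sum>i<k. c i * f i xs) \<in> lin_span X \<and> P (\<lambda>xs. \<Sum>i<k. c i * f i xs)"
  proof (intro allI impI)
    fix k assume "k \<le> m"
    then show "(\<lambda>xs. \<Sum>i<k. c i * f i xs) \<in> lin_span X \<and> P (\<lambda>xs. \<Sum>i<k. c i * f i xs)"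
    proof (induction k)
      case 0 then show ?case using z ls_zero by simp
    next
      case (Suc k)
      then have IH: "(\<lambda>xs. \<Sum>i<k. c i * f i xs) \<in> lin_span X" "P (\<lambda>xs. \<Sum>i<k. c i * f i xs)" by auto
      have fk: "f k \<in> X" using f Suc.prems by auto
      show ?case using ls_add1[OF IH(1) fk, of "c k"] s[OF IH(1) fk IH(2), of "c k"] by simp
    qed
  qed
  thus ?thesis using F' by auto
qed

lemma ls_add:
  assumes F: "F \<in> lin_span X" and G: "G \<in> lin_span X"
  shows "(\<lambda>xs. F xs + G xs) \<in> lin_span X"
  using G
proof (induction rule: ls_induct)
  case zero then show ?case using F by simp
next
  case (step G g a)
  have "(\<lambda>xs. F xs + (G xs + a * g xs)) = (\<lambda>xs. (F xs + G xs) + a * g xs)" by (simp add: algebra_simps)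
  then show ?case using ls_add1[OF step(3) step(2)] by simp
qed

lemma ls_scale:
  assumes F: "F \<in> lin_span X"
  shows "(\<lambda>xs. a * F xs) \<in> lin_span X"
  using F
proof (induction rule: ls_induct)
  case zero then show ?case using ls_zero by simp
next
  case (step G g b)
  have "(\<lambda>xs. a * (G xs + b * g xs)) = (\<lambda>xs. a * G xs + (a * b) * g xs)" by (simp add: algebra_simps)
  then show ?case using ls_add1[OF step(3) step(2)] by simp
qed

lemma ls_diff:
  assumes F: "F \<in> lin_span X" and G: "G \<in> lin_span X"
  shows "(\<lambda>xs. F xs - G xs) \<in> lin_span X"
  using ls_add[OF F ls_scale[OF G, of "-1"]] by simp

lemma ls_sum:
  assumes "\<And>i. i \<in> I \<Longrightarrow> f i \<in> lin_span X"
  shows "(\<lambda>xs. \<Sum>i\<in>I. f i xs) \<in> lin_span X"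
proof (cases "finite I")
  case True
  then show ?thesis using assms
  proof (induction I rule: finite_induct)
    case empty then show ?case using ls_zero by simp
  next
    case (insert x F)
    then show ?case using ls_add[of "f x" X "\<lambda>xs. \<Sum>i\<in>F. f i xs"] by simp
  qed
next
  case False then show ?thesis using ls_zero by simp
qed

lemma ls_mono: "X \<subseteq> Y \<Longrightarrow> lin_span X \<subseteq> lin_span Y"
  unfolding lin_span_def by blast

lemma ls_tp:
  assumes "X \<subseteq> tensor_power n" "F \<in> lin_span X"
  shows "F \<in> tensor_power n"
  using assms(2)
proof (induction rule: ls_induct)
  case zero then show ?case by (rule tp_zero)
next
  case (step F g a)
  then show ?case using assms(1) by (intro tp_add tp_scale) auto
qed

lemma tq_zero: "tq n (\<lambda>_. 0) = 0"
  unfolding tq_def by (rule tinner_zero_left)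

lemma tnorm_lt: "0 < \<epsilon> \<Longrightarrow> tnorm n d < \<epsilon> \<longleftrightarrow> tq n d < \<epsilon>\<^sup>2"
proof -
  assume e: "0 < \<epsilon>"
  have q: "0 \<le> tq n d" by (rule tq_nonneg)
  have "tnorm n d = sqrt (tq n d)" unfolding tnorm_def tq_def ..
  moreover have "sqrt (tq n d) < \<epsilon> \<longleftrightarrow> tq n d < \<epsilon>\<^sup>2"
    using real_sqrt_less_iff[of "tq n d" "\<epsilon>\<^sup>2"] e by simp
  ultimately show ?thesis by simp
qed

lemma cs_iff:
  "T \<in> closed_span n X \<longleftrightarrow> T \<in> tensor_power n \<and> (\<forall>\<delta>>0. \<exists>S\<in>lin_span X. tq n (\<lambda>xs. T xs - S xs) < \<delta>)"
proof -
  have "(\<forall>\<epsilon>>0. \<exists>S\<in>lin_span X. tnorm n (\<lambda>xs. T xs - S xs) < \<epsilon>) \<longleftrightarrow>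
        (\<forall>\<delta>>0. \<exists>S\<in>lin_span X. tq n (\<lambda>xs. T xs - S xs) < \<delta>)"
  proof
    assume h: "\<forall>\<epsilon>>0. \<exists>S\<in>lin_span X. tnorm n (\<lambda>xs. T xs - S xs) < \<epsilon>"
    show "\<forall>\<delta>>0. \<exists>S\<in>lin_span X. tq n (\<lambda>xs. T xs - S xs) < \<delta>"
    proof (intro allI impI)
      fix \<delta> :: real assume d: "\<delta> > 0"
      then obtain S where "S \<in> lin_span X" "tnorm n (\<lambda>xs. T xs - S xs) < sqrt \<delta>"
        using h[rule_format, of "sqrt \<delta>"] by auto
      thus "\<exists>S\<in>lin_span X. tq n (\<lambda>xs. T xs - S xs) < \<delta>" using tnorm_lt[of "sqrt \<delta>"] d by auto
    qed
  next
    assume h: "\<forall>\<delta>>0. \<exists>S\<in>lin_span X. tq n (\<lambda>xs. T xs - S xs) < \<delta>"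
    show "\<forall>\<epsilon>>0. \<exists>S\<in>lin_span X. tnorm n (\<lambda>xs. T xs - S xs) < \<epsilon>"
    proof (intro allI impI)
      fix \<epsilon> :: real assume e: "\<epsilon> > 0"
      then obtain S where "S \<in> lin_span X" "tq n (\<lambda>xs. T xs - S xs) < \<epsilon>\<^sup>2"
        using h[rule_format, of "\<epsilon>\<^sup>2"] by auto
      thus "\<exists>S\<in>lin_span X. tnorm n (\<lambda>xs. T xs - S xs) < \<epsilon>" using tnorm_lt[of \<epsilon>] e by auto
    qed
  qed
  thus ?thesis unfolding closed_span_def by auto
qed

lemma cs_tp: "T \<in> closed_span n X \<Longrightarrow> T \<in> tensor_power n"
  unfolding closed_span_def by auto

lemma ls_cs: "X \<subseteq> tensor_power n \<Longrightarrow> F \<in> lin_span X \<Longrightarrow> F \<in> closed_span n X"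
  unfolding cs_iff using ls_tp[of X n F] by (auto intro!: bexI[of _ F] simp: tq_zero)

lemma cs_zero: "(\<lambda>_. 0) \<in> closed_span n X"
  unfolding cs_iff using tp_zero ls_zero by (auto intro!: bexI[of _ "\<lambda>_. 0"] simp: tq_zero)

lemma cs_mono: "X \<subseteq> Y \<Longrightarrow> closed_span n X \<subseteq> closed_span n Y"
  unfolding closed_span_def using ls_mono by blast

lemma cs_add:
  assumes X: "X \<subseteq> tensor_power n" and T1: "T1 \<in> closed_span n X" and T2: "T2 \<in> closed_span n X"
  shows "(\<lambda>xs. T1 xs + T2 xs) \<in> closed_span n X"
  unfolding cs_iff
proof (intro conjI allI impI)
  show "(\<lambda>xs. T1 xs + T2 xs) \<in> tensor_power n" using tp_add cs_tp T1 T2 by blast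
  fix \<delta> :: real assume d: "\<delta> > 0"
  obtain S1 where S1: "S1 \<in> lin_span X" "tq n (\<lambda>xs. T1 xs - S1 xs) < \<delta>/4"
    using T1 d unfolding cs_iff by (meson zero_less_divide_iff zero_less_numeral)
  obtain S2 where S2: "S2 \<in> lin_span X" "tq n (\<lambda>xs. T2 xs - S2 xs) < \<delta>/4"
    using T2 d unfolding cs_iff by (meson zero_less_divide_iff zero_less_numeral)
  have d1: "(\<lambda>xs. T1 xs - S1 xs) \<in> tensor_power n" using tp_diff cs_tp[OF T1] ls_tp[OF X S1(1)] by blast
  have d2: "(\<lambda>xs. T2 xs - S2 xs) \<in> tensor_power n" using tp_diff cs_tp[OF T2] ls_tp[OF X S2(1)] by blast
  have "(\<lambda>xs. T1 xs + T2 xs - (S1 xs + S2 xs)) = (\<lambda>xs. (T1 xs - S1 xs) + (T2 xs - S2 xs))"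
    by (simp add: algebra_simps)
  hence "tq n (\<lambda>xs. T1 xs + T2 xs - (S1 xs + S2 xs)) \<le> 2 * tq n (\<lambda>xs. T1 xs - S1 xs) + 2 * tq n (\<lambda>xs. T2 xs - S2 xs)"
    using tq_add_le[OF d1 d2] by simp
  also have "\<dots> < \<delta>" using S1(2) S2(2) by linarith
  finally show "\<exists>S\<in>lin_span X. tq n (\<lambda>xs. T1 xs + T2 xs - S xs) < \<delta>"
    using ls_add[OF S1(1) S2(1)] by (intro bexI[of _ "\<lambda>xs. S1 xs + S2 xs"]) simp_all
qed

lemma cs_scale:
  assumes T: "T \<in> closed_span n X"
  shows "(\<lambda>xs. a * T xs) \<in> closed_span n X"
  unfolding cs_iff
proof (intro conjI allI impI)
  show "(\<lambda>xs. a * T xs) \<in> tensor_power n" using tp_scale cs_tp T by blast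
  fix \<delta> :: real assume d: "\<delta> > 0"
  have pos: "0 < \<delta> / (a\<^sup>2 + 1)" using d by (simp add: add_nonneg_pos)
  obtain S where S: "S \<in> lin_span X" "tq n (\<lambda>xs. T xs - S xs) < \<delta> / (a\<^sup>2 + 1)"
    using T pos unfolding cs_iff by blast
  have "(\<lambda>xs. a * T xs - a * S xs) = (\<lambda>xs. a * (T xs - S xs))" by (simp add: algebra_simps)
  hence "tq n (\<lambda>xs. a * T xs - a * S xs) = a\<^sup>2 * tq n (\<lambda>xs. T xs - S xs)" using tq_scale by simp
  also have "\<dots> \<le> (a\<^sup>2 + 1) * tq n (\<lambda>xs. T xs - S xs)"
    by (intro mult_right_mono tq_nonneg) simp
  also have "\<dots> < (a\<^sup>2 + 1) * (\<delta> / (a\<^sup>2 + 1))"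
    using S(2) by (intro mult_strict_left_mono) (auto simp: add_nonneg_pos)
  also have "\<dots> = \<delta>"
  proof -
    have "a\<^sup>2 + 1 \<noteq> 0" by (metis add_nonneg_pos zero_le_power2 zero_less_one less_irrefl)
    thus ?thesis by simp
  qed
  finally show "\<exists>S\<in>lin_span X. tq n (\<lambda>xs. a * T xs - S xs) < \<delta>"
    using ls_scale[OF S(1), of a] by (intro bexI[of _ "\<lambda>xs. a * S xs"]) simp_all
qed

lemma cs_diff:
  assumes X: "X \<subseteq> tensor_power n" and T1: "T1 \<in> closed_span n X" and T2: "T2 \<in> closed_span n X"
  shows "(\<lambda>xs. T1 xs - T2 xs) \<in> closed_span n X"
  using cs_add[OF X T1 cs_scale[OF T2, of "-1"]] by simp

lemma cs_op:
  assumes X: "X \<subseteq> tensor_power n" and Y: "Y \<subseteq> tensor_power n"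
    and add: "\<And>a b. F (\<lambda>xs. a xs + b xs) = (\<lambda>xs. F a xs + F b xs)"
    and scl: "\<And>a c. F (\<lambda>xs. c * a xs) = (\<lambda>xs. c * F a xs)"
    and tpF: "\<And>d. d \<in> tensor_power n \<Longrightarrow> F d \<in> tensor_power n"
    and bnd: "\<And>d. d \<in> tensor_power n \<Longrightarrow> tq n (F d) \<le> M * tq n d"
    and gen: "\<And>g. g \<in> X \<Longrightarrow> F g \<in> lin_span Y"
    and T: "T \<in> closed_span n X"
  shows "F T \<in> closed_span n Y"
proof -
  have F0: "F (\<lambda>_. 0) = (\<lambda>_. 0)"
    using scl[of 0 "\<lambda>_. 0"] by simp
  have Fls: "F S \<in> lin_span Y" if "S \<in> lin_span X" for S
    using that
  proof (induction rule: ls_induct)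
    case zero then show ?case using F0 ls_zero by simp
  next
    case (step G g a)
    have "F (\<lambda>xs. G xs + a * g xs) = (\<lambda>xs. F G xs + a * F g xs)"
      using add[of G "\<lambda>xs. a * g xs"] scl[of a g] by simp
    then show ?case using ls_add[OF step(3) ls_scale[OF gen[OF step(2)], of a]] by simp
  qed
  have Fdiff: "F (\<lambda>xs. A xs - B xs) = (\<lambda>xs. F A xs - F B xs)" for A B
    using add[of A "\<lambda>xs. (-1) * B xs"] scl[of "-1" B] by simp
  show ?thesis unfolding cs_iff
  proof (intro conjI allI impI)
    show "F T \<in> tensor_power n" using tpF cs_tp T by blast
    fix \<delta> :: real assume d: "\<delta> > 0"
    have pos: "0 < \<delta> / (\<bar>M\<bar> + 1)" using d by simp
    obtain S where S: "S \<in> lin_span X" "tq n (\<lambda>xs. T xs - S xs) < \<delta> / (\<bar>M\<bar> + 1)"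
      using T pos unfolding cs_iff by blast
    have dd: "(\<lambda>xs. T xs - S xs) \<in> tensor_power n" using tp_diff cs_tp[OF T] ls_tp[OF X S(1)] by blast
    have "tq n (\<lambda>xs. F T xs - F S xs) = tq n (F (\<lambda>xs. T xs - S xs))" using Fdiff by simp
    also have "\<dots> \<le> M * tq n (\<lambda>xs. T xs - S xs)" using bnd[OF dd] .
    also have "\<dots> \<le> (\<bar>M\<bar> + 1) * tq n (\<lambda>xs. T xs - S xs)"
      using tq_nonneg by (intro mult_right_mono) auto
    also have "\<dots> < (\<bar>M\<bar> + 1) * (\<delta> / (\<bar>M\<bar> + 1))"
      using S(2) by (intro mult_strict_left_mono) auto
    also have "\<dots> = \<delta>" by simp
    finally show "\<exists>S\<in>lin_span Y. tq n (\<lambda>xs. F T xs - S xs) < \<delta>"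
      using Fls[OF S(1)] by (intro bexI[of _ "F S"]) simp_all
  qed
qed




definition eig :: "nat \<Rightarrow> nat set \<Rightarrow> ((nat \<Rightarrow> nat) \<Rightarrow> real) \<Rightarrow> ('a list \<Rightarrow> real) \<Rightarrow> bool" where
  "eig n R ch T \<longleftrightarrow> (\<forall>\<pi>. \<pi> permutes R \<longrightarrow> act \<pi> T = (\<lambda>xs. ch \<pi> * T xs))"

definition sgnc :: "(nat \<Rightarrow> nat) \<Rightarrow> real" where
  "sgnc \<pi> = of_int (sign \<pi>)"

lemma act_compose:
  assumes "T \<in> tensor_power n" "g permutes {0..<n}"
  shows "act (f \<circ> g) T = act f (act g T)"
proof (rule ext)
  fix xs :: "'a list"
  show "act (f \<circ> g) T xs = act f (act g T) xs"
  proof (cases "length xs = n")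
    case True thus ?thesis using permute_list_compose'[OF assms(2) True, of f] by (simp add: act_def)
  next
    case False thus ?thesis using tpD(1)[OF assms(1)] by (simp add: act_def)
  qed
qed

lemma act_id [simp]: "act id T = T"
  by (simp add: act_def)

lemma act_scale: "act \<sigma> (\<lambda>xs. c * T xs) = (\<lambda>xs. c * act \<sigma> T xs)"
  by (simp add: act_def)

lemma sym_skew_eig:
  assumes T: "T \<in> tensor_power n"
  shows "sym_skew_in n S T \<longleftrightarrow> eig n S (\<lambda>_. 1) T \<and> eig n ({0..<n} - S) sgnc T"
proof -
  have z: "T (permute_list \<pi> xs) = 0" "T xs = 0" if "length xs \<noteq> n" for \<pi> xs
    using tpD(1)[OF T] that by auto
  show ?thesis
  proof
    assume s: "sym_skew_in n S T"
    have a: "act \<pi> T xs = 1 * T xs" if "\<pi> permutes S" for \<pi> xs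
    proof (cases "length xs = n")
      case True thus ?thesis using s that unfolding sym_skew_in_def act_def by simp
    next
      case False thus ?thesis using z[OF False] unfolding act_def by simp
    qed
    have b: "act \<pi> T xs = sgnc \<pi> * T xs" if "\<pi> permutes {0..<n} - S" for \<pi> xs
    proof (cases "length xs = n")
      case True thus ?thesis using s that unfolding sym_skew_in_def act_def sgnc_def by simp
    next
      case False thus ?thesis using z[OF False] unfolding act_def by simp
    qed
    show "eig n S (\<lambda>_. 1) T \<and> eig n ({0..<n} - S) sgnc T"
      unfolding eig_def using a b by (auto simp del: mult_1 mult_1_left)
  next
    assume e: "eig n S (\<lambda>_. 1) T \<and> eig n ({0..<n} - S) sgnc T"
    have a: "T (permute_list \<pi> xs) = T xs" if "\<pi> permutes S" for \<pi> xs
      using e that unfolding eig_def act_def by (metis mult_1)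
    have b: "T (permute_list \<pi> xs) = of_int (sign \<pi>) * T xs" if "\<pi> permutes {0..<n} - S" for \<pi> xs
    proof -
      have "act \<pi> T = (\<lambda>xs. sgnc \<pi> * T xs)" using e that unfolding eig_def by blast
      thus ?thesis unfolding act_def sgnc_def by meson
    qed
    show "sym_skew_in n S T" unfolding sym_skew_in_def using a b by blast
  qed
qed

lemma conj_permutes:
  assumes \<sigma>: "\<sigma> permutes U" and A: "finite A" and \<pi>: "\<pi> permutes \<sigma> ` A"
  shows "inv \<sigma> \<circ> \<pi> \<circ> \<sigma> permutes A"
proof (rule inj_imp_permutes[OF _ A])
  have i1: "inj \<sigma>" using permutes_inj[OF \<sigma>] .
  have i2: "inj \<pi>" using permutes_inj[OF \<pi>] .
  have i3: "inj (inv \<sigma>)" using permutes_inj[OF permutes_inv[OF \<sigma>]] .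
  show "inj_on (inv \<sigma> \<circ> \<pi> \<circ> \<sigma>) A"
    using i1 i2 i3 by (simp add: inj_compose inj_on_subset[of _ UNIV])
  show "(inv \<sigma> \<circ> \<pi> \<circ> \<sigma>) x \<in> A" if "x \<in> A" for x
  proof -
    have "\<pi> (\<sigma> x) \<in> \<sigma> ` A" using permutes_in_image[OF \<pi>] that by auto
    then obtain y where "y \<in> A" "\<pi> (\<sigma> x) = \<sigma> y" by auto
    thus ?thesis using permutes_inverses(2)[OF \<sigma>] by simp
  qed
  show "(inv \<sigma> \<circ> \<pi> \<circ> \<sigma>) x = x" if "x \<notin> A" for x
  proof -
    have "\<sigma> x \<notin> \<sigma> ` A" using that i1 by (auto dest: injD)
    hence "\<pi> (\<sigma> x) = \<sigma> x" using permutes_not_in[OF \<pi>] by simp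
    thus ?thesis using permutes_inverses(2)[OF \<sigma>] by simp
  qed
qed

lemma eig_conj:
  assumes T: "T \<in> tensor_power n" and \<sigma>: "\<sigma> permutes {0..<n}" and A: "A \<subseteq> {0..<n}"
    and e: "eig n A ch T"
    and chc: "\<And>\<pi>. \<pi> permutes \<sigma> ` A \<Longrightarrow> ch (inv \<sigma> \<circ> \<pi> \<circ> \<sigma>) = ch \<pi>"
  shows "eig n (\<sigma> ` A) ch (act \<sigma> T)"
  unfolding eig_def
proof (intro allI impI)
  fix \<pi> assume \<pi>: "\<pi> permutes \<sigma> ` A"
  define \<rho> where "\<rho> = inv \<sigma> \<circ> \<pi> \<circ> \<sigma>"
  have fA: "finite A" using A finite_subset by blast
  have \<rho>A: "\<rho> permutes A" unfolding \<rho>_def by (rule conj_permutes[OF \<sigma> fA \<pi>])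
  have \<rho>n: "\<rho> permutes {0..<n}" using permutes_subset[OF \<rho>A A] .
  have eq: "\<pi> \<circ> \<sigma> = \<sigma> \<circ> \<rho>"
    unfolding \<rho>_def using permutes_inverses(1)[OF \<sigma>] by (auto simp: fun_eq_iff)
  have "act \<pi> (act \<sigma> T) = act (\<pi> \<circ> \<sigma>) T" using act_compose[OF T \<sigma>] by simp
  also have "\<dots> = act \<sigma> (act \<rho> T)" unfolding eq using act_compose[OF T \<rho>n] by simp
  also have "act \<rho> T = (\<lambda>xs. ch \<rho> * T xs)" using e \<rho>A unfolding eig_def by blast
  also have "ch \<rho> = ch \<pi>" unfolding \<rho>_def by (rule chc[OF \<pi>])
  finally show "act \<pi> (act \<sigma> T) = (\<lambda>xs. ch \<pi> * act \<sigma> T xs)" by (simp add: act_scale)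
qed

lemma sgnc_conj:
  assumes \<sigma>: "\<sigma> permutes {0..<n}" and \<pi>: "\<pi> permutes B" and B: "finite B"
  shows "sgnc (inv \<sigma> \<circ> \<pi> \<circ> \<sigma>) = sgnc \<pi>"
proof -
  have p1: "permutation \<sigma>" using permutes_imp_permutation[OF _ \<sigma>] by simp
  have p2: "permutation \<pi>" using permutes_imp_permutation[OF B \<pi>] .
  have p3: "permutation (inv \<sigma>)" using permutes_imp_permutation[OF _ permutes_inv[OF \<sigma>]] by simp
  have "sign (inv \<sigma> \<circ> \<pi> \<circ> \<sigma>) = sign (inv \<sigma>) * sign \<pi> * sign \<sigma>"
    using p1 p2 p3 by (simp add: sign_compose permutation_compose)
  also have "\<dots> = sign \<pi> * (sign \<sigma> * sign \<sigma>)" using sign_inverse[OF p1] by simp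
  also have "\<dots> = sign \<pi>" by simp
  finally show ?thesis unfolding sgnc_def by simp
qed

lemma sym_skew_conj:
  assumes T: "T \<in> tensor_power n" and \<sigma>: "\<sigma> permutes {0..<n}" and S: "S \<subseteq> {0..<n}"
    and s: "sym_skew_in n S T"
  shows "sym_skew_in n (\<sigma> ` S) (act \<sigma> T)"
proof -
  have e1: "eig n S (\<lambda>_. 1) T" and e2: "eig n ({0..<n} - S) sgnc T"
    using s sym_skew_eig[OF T] by auto
  have img: "\<sigma> ` ({0..<n} - S) = {0..<n} - \<sigma> ` S"
    using permutes_image[OF \<sigma>] permutes_inj[OF \<sigma>] by (metis image_set_diff)
  have "eig n (\<sigma> ` S) (\<lambda>_. 1) (act \<sigma> T)" by (rule eig_conj[OF T \<sigma> S e1]) simp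
  moreover have "eig n (\<sigma> ` ({0..<n} - S)) sgnc (act \<sigma> T)"
    by (rule eig_conj[OF T \<sigma> _ e2]) (auto intro: sgnc_conj[OF \<sigma>] finite_subset)
  ultimately show ?thesis using sym_skew_eig[OF tp_act[OF T \<sigma>]] img by simp
qed




lemma TI1:
  assumes "t \<noteq> a" "t \<noteq> b"
  shows "Transposition.transpose a b \<circ> Transposition.transpose s t = Transposition.transpose (Transposition.transpose a b s) t \<circ> Transposition.transpose a b"
  using assms by (auto simp: fun_eq_iff Transposition.transpose_def)

lemma TI2:
  assumes "a \<noteq> t" "s \<noteq> t" "a \<noteq> s"
  shows "Transposition.transpose a t \<circ> Transposition.transpose s t = Transposition.transpose s t \<circ> Transposition.transpose a s"
  using assms by (auto simp: fun_eq_iff Transposition.transpose_def)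

lemma TI3:
  assumes "inj \<pi>" "\<pi> s = s" "\<pi> t = t"
  shows "\<pi> \<circ> Transposition.transpose s t = Transposition.transpose s t \<circ> \<pi>"
proof (rule ext)
  fix x
  show "(\<pi> \<circ> Transposition.transpose s t) x = (Transposition.transpose s t \<circ> \<pi>) x"
  proof (cases "x = s \<or> x = t")
    case True thus ?thesis using assms by (auto simp: Transposition.transpose_def)
  next
    case False
    hence "\<pi> x \<noteq> s" "\<pi> x \<noteq> t" using assms by (metis injD)+
    thus ?thesis using False by (simp add: Transposition.transpose_def)
  qed
qed

lemma act_sum: "act \<sigma> (\<lambda>xs. \<Sum>i\<in>I. F i xs) = (\<lambda>xs. \<Sum>i\<in>I. act \<sigma> (F i) xs)"
  by (simp add: act_def)

lemma act_add: "act \<sigma> (\<lambda>xs. A xs + B xs) = (\<lambda>xs. act \<sigma> A xs + act \<sigma> B xs)"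
  by (simp add: act_def)

lemma eigD: "eig n R ch T \<Longrightarrow> \<pi> permutes R \<Longrightarrow> act \<pi> T = (\<lambda>xs. ch \<pi> * T xs)"
  unfolding eig_def by blast

lemma gen_step:
  fixes T :: "'a::real_inner list \<Rightarrow> real"
  assumes T: "T \<in> tensor_power n"
    and R: "R \<subseteq> {0..<n}" and R': "R' \<subseteq> {0..<n}" and disj: "R \<inter> R' = {}" and t: "t \<in> R'"
    and eR: "eig n R ch T" and eR': "eig n R' ch' T"
    and chid: "ch id = 1"
    and chtr: "\<And>a b. a \<noteq> b \<Longrightarrow> ch (Transposition.transpose a b) = c"
    and chmul: "\<And>a b p. a \<noteq> b \<Longrightarrow> p permutes insert t R \<Longrightarrow> ch (Transposition.transpose a b \<circ> p) = c * ch p"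
    and cc: "c * c = 1"
  defines "u \<equiv> (\<lambda>xs. T xs + c * (\<Sum>s\<in>R. act (Transposition.transpose s t) T xs))"
  shows "u \<in> tensor_power n" "eig n (insert t R) ch u" "eig n (R' - {t}) ch' u"
proof -
  have tn: "t \<in> {0..<n}" using t R' by auto
  have tR: "t \<notin> R" using t disj by auto
  have fR: "finite R" using R finite_subset by blast
  have trn: "Transposition.transpose s t permutes {0..<n}" if "s \<in> R" for s
    using that R tn by (intro permutes_swap_id) auto
  have actT: "act (Transposition.transpose s t) T \<in> tensor_power n" if "s \<in> R" for s
    using tp_act[OF T trn[OF that]] .
  show utp: "u \<in> tensor_power n" unfolding u_def
    by (intro tp_add tp_scale T tp_sum actT)
  have u_act: "act \<sigma> u = (\<lambda>xs. act \<sigma> T xs + c * (\<Sum>s\<in>R. act \<sigma> (act (Transposition.transpose s t) T) xs))" for \<sigma>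
    unfolding u_def by (simp add: act_def)
  have KT: "act (Transposition.transpose a b) u = (\<lambda>xs. c * u xs)"
    if ab: "a \<in> insert t R" "b \<in> insert t R" "a \<noteq> b" for a b
  proof -
    have case2: "act (Transposition.transpose a t) u = (\<lambda>xs. c * u xs)" if a: "a \<in> R" for a
    proof -
      have at: "a \<noteq> t" using a tR by auto
      have inner: "act (Transposition.transpose a t) (act (Transposition.transpose s t) T) = (\<lambda>xs. c * act (Transposition.transpose s t) T xs)"
        if s: "s \<in> R" "s \<noteq> a" for s
      proof -
        have st: "s \<noteq> t" using s tR by auto
        have asR: "Transposition.transpose a s permutes R" using a s by (intro permutes_swap_id)
        have asn: "Transposition.transpose a s permutes {0..<n}" using permutes_subset[OF asR R] .
        have "act (Transposition.transpose a t) (act (Transposition.transpose s t) T) = act (Transposition.transpose a t \<circ> Transposition.transpose s t) T"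
          using act_compose[OF T trn[OF s(1)]] by simp
        also have "\<dots> = act (Transposition.transpose s t \<circ> Transposition.transpose a s) T" using TI2[OF at st] s(2) by auto
        also have "\<dots> = act (Transposition.transpose s t) (act (Transposition.transpose a s) T)" using act_compose[OF T asn] .
        also have "act (Transposition.transpose a s) T = (\<lambda>xs. c * T xs)"
          using eigD[OF eR asR] chtr[of a s] s(2) by auto
        finally show ?thesis by (simp add: act_scale)
      qed
      have self: "act (Transposition.transpose a t) (act (Transposition.transpose a t) T) = T"
        using act_compose[OF T trn[OF a], of "Transposition.transpose a t"] by simp
      have sum1: "(\<Sum>s\<in>R. act (Transposition.transpose a t) (act (Transposition.transpose s t) T) xs)
            = T xs + c * (\<Sum>s\<in>R-{a}. act (Transposition.transpose s t) T xs)" for xs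
      proof -
        have "(\<Sum>s\<in>R. act (Transposition.transpose a t) (act (Transposition.transpose s t) T) xs)
            = act (Transposition.transpose a t) (act (Transposition.transpose a t) T) xs + (\<Sum>s\<in>R-{a}. act (Transposition.transpose a t) (act (Transposition.transpose s t) T) xs)"
          using sum.remove[OF fR a] by blast
        also have "(\<Sum>s\<in>R-{a}. act (Transposition.transpose a t) (act (Transposition.transpose s t) T) xs) = (\<Sum>s\<in>R-{a}. c * act (Transposition.transpose s t) T xs)"
          by (rule sum.cong) (use inner in auto)
        finally show ?thesis using self by (simp add: sum_distrib_left)
      qed
      have sum2: "(\<Sum>s\<in>R. act (Transposition.transpose s t) T xs) = act (Transposition.transpose a t) T xs + (\<Sum>s\<in>R-{a}. act (Transposition.transpose s t) T xs)" for xs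
        using sum.remove[OF fR a] by blast
      show ?thesis
      proof (rule ext)
        fix xs
        have "act (Transposition.transpose a t) u xs = act (Transposition.transpose a t) T xs + c * (T xs + c * (\<Sum>s\<in>R-{a}. act (Transposition.transpose s t) T xs))"
          using u_act[of "Transposition.transpose a t"] sum1[of xs] by simp
        also have "\<dots> = c * T xs + (c * c) * act (Transposition.transpose a t) T xs + (c * c) * (\<Sum>s\<in>R-{a}. act (Transposition.transpose s t) T xs)"
          using cc by (simp add: algebra_simps)
        also have "\<dots> = c * u xs" unfolding u_def sum2 by (simp add: algebra_simps)
        finally show "act (Transposition.transpose a t) u xs = c * u xs" .
      qed
    qed
    show ?thesis
    proof (cases "a = t \<or> b = t")
      case True
      then show ?thesis
      proof
        assume "a = t" hence "b \<in> R" using ab by auto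
        thus ?thesis using case2[of b] \<open>a = t\<close> by (simp add: transpose_commute)
      next
        assume "b = t" hence "a \<in> R" using ab by auto
        thus ?thesis using case2[of a] \<open>b = t\<close> by simp
      qed
    next
      case False
      hence aR: "a \<in> R" and bR: "b \<in> R" using ab by auto
      have abR: "Transposition.transpose a b permutes R" using aR bR by (intro permutes_swap_id)
      have abn: "Transposition.transpose a b permutes {0..<n}" using permutes_subset[OF abR R] .
      have ta: "t \<noteq> a" "t \<noteq> b" using False by auto
      have actab: "act (Transposition.transpose a b) T = (\<lambda>xs. c * T xs)"
        using eigD[OF eR abR] chtr[OF ab(3)] by simp
      have inner: "act (Transposition.transpose a b) (act (Transposition.transpose s t) T) = (\<lambda>xs. c * act (Transposition.transpose (Transposition.transpose a b s) t) T xs)"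
        if s: "s \<in> R" for s
      proof -
        have "act (Transposition.transpose a b) (act (Transposition.transpose s t) T) = act (Transposition.transpose a b \<circ> Transposition.transpose s t) T"
          using act_compose[OF T trn[OF s]] by simp
        also have "\<dots> = act (Transposition.transpose (Transposition.transpose a b s) t \<circ> Transposition.transpose a b) T" using TI1[OF ta] by simp
        also have "\<dots> = act (Transposition.transpose (Transposition.transpose a b s) t) (act (Transposition.transpose a b) T)" using act_compose[OF T abn] .
        finally show ?thesis using actab by (simp add: act_scale)
      qed
      have reidx: "(\<Sum>s\<in>R. act (Transposition.transpose (Transposition.transpose a b s) t) T xs) = (\<Sum>s\<in>R. act (Transposition.transpose s t) T xs)" for xs
        using sum.reindex_bij_betw[OF permutes_imp_bij[OF abR], of "\<lambda>s. act (Transposition.transpose s t) T xs"] .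
      show ?thesis
      proof (rule ext)
        fix xs
        have "act (Transposition.transpose a b) u xs = c * T xs + c * (\<Sum>s\<in>R. c * act (Transposition.transpose (Transposition.transpose a b s) t) T xs)"
          using u_act[of "Transposition.transpose a b"] inner actab by simp
        also have "\<dots> = c * u xs" unfolding u_def using reidx[of xs]
          by (simp add: sum_distrib_left[symmetric] algebra_simps)
        finally show "act (Transposition.transpose a b) u xs = c * u xs" .
      qed
    qed
  qed
  show "eig n (insert t R) ch u"
    unfolding eig_def
  proof (intro allI impI)
    fix \<pi> assume \<pi>: "\<pi> permutes insert t R"
    have fin: "finite (insert t R)" using fR by simp
    have sub: "insert t R \<subseteq> {0..<n}" using R tn by auto
    show "act \<pi> u = (\<lambda>xs. ch \<pi> * u xs)"
      using \<pi> fin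
    proof (induction rule: permutes_induct)
      case id then show ?case using chid by (simp add: act_def id_def)
    next
      case (swap a b p)
      have pn: "p permutes {0..<n}" using permutes_subset[OF swap(4) sub] .
      have "act (Transposition.transpose a b \<circ> p) u = act (Transposition.transpose a b) (act p u)" using act_compose[OF utp pn] .
      also have "\<dots> = (\<lambda>xs. ch p * (c * u xs))" using swap(5) KT[OF swap(1,2,3)] by (simp add: act_scale)
      also have "\<dots> = (\<lambda>xs. ch (Transposition.transpose a b \<circ> p) * u xs)" using chmul[OF swap(3,4)] by (simp add: algebra_simps)
      finally show ?case .
    qed
  qed
  show "eig n (R' - {t}) ch' u"
    unfolding eig_def
  proof (intro allI impI)
    fix \<pi> assume \<pi>: "\<pi> permutes R' - {t}"
    have \<pi>R': "\<pi> permutes R'" using permutes_subset[OF \<pi>] by blast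
    have \<pi>n: "\<pi> permutes {0..<n}" using permutes_subset[OF \<pi>R' R'] .
    have actT: "act \<pi> T = (\<lambda>xs. ch' \<pi> * T xs)" using eigD[OF eR' \<pi>R'] .
    have inner: "act \<pi> (act (Transposition.transpose s t) T) = (\<lambda>xs. ch' \<pi> * act (Transposition.transpose s t) T xs)" if s: "s \<in> R" for s
    proof -
      have "s \<notin> R' - {t}" using s disj by auto
      hence ps: "\<pi> s = s" using permutes_not_in[OF \<pi>] by blast
      have pt: "\<pi> t = t" using permutes_not_in[OF \<pi>] by blast
      have "act \<pi> (act (Transposition.transpose s t) T) = act (\<pi> \<circ> Transposition.transpose s t) T" using act_compose[OF T trn[OF s]] by simp
      also have "\<dots> = act (Transposition.transpose s t \<circ> \<pi>) T" using TI3[OF permutes_inj[OF \<pi>] ps pt] by simp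
      also have "\<dots> = act (Transposition.transpose s t) (act \<pi> T)" using act_compose[OF T \<pi>n] .
      finally show ?thesis using actT by (simp add: act_scale)
    qed
    show "act \<pi> u = (\<lambda>xs. ch' \<pi> * u xs)"
    proof (rule ext)
      fix xs
      have "act \<pi> u xs = ch' \<pi> * T xs + c * (\<Sum>s\<in>R. ch' \<pi> * act (Transposition.transpose s t) T xs)"
        using u_act[of \<pi>] inner actT by simp
      also have "\<dots> = ch' \<pi> * u xs" unfolding u_def by (simp add: sum_distrib_left[symmetric] algebra_simps)
      finally show "act \<pi> u xs = ch' \<pi> * u xs" .
    qed
  qed
qed




definition gen :: "nat \<Rightarrow> nat \<Rightarrow> ('a::real_inner list \<Rightarrow> real) set" where
  "gen n m = {T \<in> tensor_power n. \<exists>S. S \<subseteq> {0..<n} \<and> card S = m \<and> sym_skew_in n S T}"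

lemma gen_tp: "gen n m \<subseteq> tensor_power n"
  unfolding gen_def by auto

lemma sss_gen: "sym_skew_space (int m) (int p) = closed_span (m + p) (gen (m + p) m)"
proof -
  have eq: "(\<Union>S\<in>{S. S \<subseteq> {0..<m+p} \<and> card S = m}. {T \<in> tensor_power (m+p). sym_skew_in (m+p) S T})
        = gen (m + p) m"
    unfolding gen_def by auto
  have "sym_skew_space (int m) (int p) = closed_span (m+p) (\<Union>S\<in>{S. S \<subseteq> {0..<m+p} \<and> card S = m}. {T \<in> tensor_power (m+p). sym_skew_in (m+p) S T})"
    unfolding sym_skew_space_def Let_def by (simp add: nat_add_distrib)
  also have "\<dots> = closed_span (m + p) (gen (m + p) m)" by (simp only: eq)
  finally show ?thesis .
qed

lemma sss_neg1: "m < 0 \<Longrightarrow> sym_skew_space m p = {\<lambda>_. 0}"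
  unfolding sym_skew_space_def by simp

lemma sss_neg2: "p < 0 \<Longrightarrow> sym_skew_space m p = {\<lambda>_. 0}"
  unfolding sym_skew_space_def by simp

lemma sgnc_swap: "a \<noteq> b \<Longrightarrow> sgnc (Transposition.transpose a b) = -1"
  unfolding sgnc_def by (simp add: sign_swap_id)

lemma sgnc_mul:
  assumes "p permutes A" "finite A"
  shows "sgnc (Transposition.transpose a b \<circ> p) = sgnc (Transposition.transpose a b) * sgnc p"
  unfolding sgnc_def
  using sign_compose[OF permutation_swap_id permutes_imp_permutation[OF assms(2,1)]] by simp

lemma sgnc_id: "sgnc id = 1"
  unfolding sgnc_def by simp

definition Dop :: "nat \<Rightarrow> ('a list \<Rightarrow> real) \<Rightarrow> ('a list \<Rightarrow> real)" where
  "Dop n T = (\<lambda>xs. \<Sum>i\<in>{0..<n}. \<Sum>j\<in>{0..<n}-{i}. act (Transposition.transpose i j) T xs)"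

definition Lop :: "nat \<Rightarrow> real \<Rightarrow> real \<Rightarrow> ('a list \<Rightarrow> real) \<Rightarrow> ('a list \<Rightarrow> real)" where
  "Lop n \<alpha> \<beta> T = (\<lambda>xs. \<alpha> * T xs + \<beta> * Dop n T xs)"

context
  fixes n k q :: nat and S :: "nat set" and T :: "'a::real_inner list \<Rightarrow> real"
  assumes T: "T \<in> tensor_power n" and S: "S \<subseteq> {0..<n}" and cS: "card S = k" and nkq: "n = k + q"
    and sT: "sym_skew_in n S T"
begin

definition Sc where "Sc = {0..<n} - S"

lemma fS: "finite S" using S finite_subset by blast
lemma fSc: "finite Sc" unfolding Sc_def by simp
lemma cSc: "card Sc = q"
  unfolding Sc_def using card_Diff_subset[OF fS S] cS nkq by simp
lemma disj: "S \<inter> Sc = {}" unfolding Sc_def by auto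
lemma Sc_sub: "Sc \<subseteq> {0..<n}" unfolding Sc_def by auto
lemma eS: "eig n S (\<lambda>_. 1) T" using sT sym_skew_eig[OF T] by auto
lemma eSc: "eig n Sc sgnc T" using sT sym_skew_eig[OF T] unfolding Sc_def by auto

definition Xg where
  "Xg = (\<lambda>xs. \<Sum>s\<in>S. \<Sum>t\<in>Sc. act (Transposition.transpose s t) T xs)"

definition ut where
  "ut t = (\<lambda>xs. T xs + 1 * (\<Sum>s\<in>S. act (Transposition.transpose s t) T xs))"

definition vs where
  "vs s = (\<lambda>xs. T xs + (-1) * (\<Sum>r\<in>Sc. act (Transposition.transpose r s) T xs))"

lemma ut_gen:
  assumes t: "t \<in> Sc"
  shows "ut t \<in> gen n (Suc k)"
proof -
  have g: "ut t \<in> tensor_power n" "eig n (insert t S) (\<lambda>_. 1) (ut t)" "eig n (Sc - {t}) sgnc (ut t)"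
    unfolding ut_def
    by (rule gen_step[OF T S Sc_sub disj t eS eSc, where c=1]; simp add: sgnc_def)+
  have "{0..<n} - insert t S = Sc - {t}" unfolding Sc_def by auto
  hence "sym_skew_in n (insert t S) (ut t)" using g sym_skew_eig[OF g(1)] by simp
  moreover have "card (insert t S) = Suc k"
  proof -
    have "t \<notin> S" using t disj by auto
    thus ?thesis using fS cS by simp
  qed
  moreover have "insert t S \<subseteq> {0..<n}" using t S Sc_sub by auto
  ultimately show ?thesis using g(1) unfolding gen_def by blast
qed

lemma vs_gen:
  assumes s: "s \<in> S"
  shows "vs s \<in> gen n (k - 1)"
proof -
  have disj': "Sc \<inter> S = {}" using disj by auto
  have fin: "finite (insert s Sc)" using fSc by simp
  have g: "vs s \<in> tensor_power n" "eig n (insert s Sc) sgnc (vs s)" "eig n (S - {s}) (\<lambda>_. 1) (vs s)"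
    unfolding vs_def
    by (rule gen_step[OF T Sc_sub S disj' s eSc eS, where c="-1"];
        auto simp: sgnc_id sgnc_swap sgnc_mul[OF _ fin])+
  have "{0..<n} - (S - {s}) = insert s Sc" unfolding Sc_def using s S by auto
  hence "sym_skew_in n (S - {s}) (vs s)" using g sym_skew_eig[OF g(1)] by simp
  moreover have "card (S - {s}) = k - 1" using s fS cS by simp
  moreover have "S - {s} \<subseteq> {0..<n}" using S by auto
  ultimately show ?thesis using g(1) unfolding gen_def by blast
qed

lemma sum_ut: "(\<lambda>xs. \<Sum>t\<in>Sc. ut t xs) = (\<lambda>xs. real q * T xs + Xg xs)"
  unfolding ut_def Xg_def
  by (auto simp: fun_eq_iff sum.distrib cSc sum.swap[of _ S Sc])

lemma sum_vs: "(\<lambda>xs. \<Sum>s\<in>S. vs s xs) = (\<lambda>xs. real k * T xs - Xg xs)"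
  unfolding vs_def Xg_def
  by (auto simp: fun_eq_iff sum_subtractf cS transpose_commute)

definition \<kappa> where "\<kappa> = real k * (real k - 1) - real q * (real q - 1)"

lemma Dop_gen: "Dop n T = (\<lambda>xs. \<kappa> * T xs + 2 * Xg xs)"
proof (rule ext)
  fix xs
  let ?f = "\<lambda>i j. act (Transposition.transpose i j) T xs"
  have U: "{0..<n} = S \<union> Sc" "S \<inter> Sc = {}" using S unfolding Sc_def by auto
  have inS: "(\<Sum>j\<in>{0..<n}-{i}. ?f i j) = (real k - 1) * T xs + (\<Sum>j\<in>Sc. ?f i j)" if i: "i \<in> S" for i
  proof -
    have "{0..<n}-{i} = (S - {i}) \<union> Sc" "(S - {i}) \<inter> Sc = {}" using i S unfolding Sc_def by auto
    hence "(\<Sum>j\<in>{0..<n}-{i}. ?f i j) = (\<Sum>j\<in>S-{i}. ?f i j) + (\<Sum>j\<in>Sc. ?f i j)"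
      using fS fSc by (simp add: sum.union_disjoint)
    also have "(\<Sum>j\<in>S-{i}. ?f i j) = (\<Sum>j\<in>S-{i}. T xs)"
    proof (rule sum.cong)
      fix j assume j: "j \<in> S - {i}"
      have "Transposition.transpose i j permutes S" using i j by (intro permutes_swap_id) auto
      thus "?f i j = T xs" using eigD[OF eS] by simp
    qed simp
    also have "\<dots> = (real k - 1) * T xs"
    proof -
      have "card (S - {i}) = k - 1" using i fS cS by simp
      moreover have "k \<ge> 1" using i fS cS by (metis card_0_eq empty_iff less_one not_le)
      ultimately show ?thesis by (simp add: of_nat_diff)
    qed
    finally show ?thesis .
  qed
  have inSc: "(\<Sum>j\<in>{0..<n}-{i}. ?f i j) = (\<Sum>j\<in>S. ?f j i) - (real q - 1) * T xs" if i: "i \<in> Sc" for i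
  proof -
    have "{0..<n}-{i} = S \<union> (Sc - {i})" "S \<inter> (Sc - {i}) = {}" using i S unfolding Sc_def by auto
    hence "(\<Sum>j\<in>{0..<n}-{i}. ?f i j) = (\<Sum>j\<in>S. ?f i j) + (\<Sum>j\<in>Sc-{i}. ?f i j)"
      using fS fSc by (simp add: sum.union_disjoint)
    also have "(\<Sum>j\<in>Sc-{i}. ?f i j) = (\<Sum>j\<in>Sc-{i}. - T xs)"
    proof (rule sum.cong)
      fix j assume j: "j \<in> Sc - {i}"
      have "Transposition.transpose i j permutes Sc" using i j by (intro permutes_swap_id) auto
      moreover have "i \<noteq> j" using j by auto
      ultimately show "?f i j = - T xs" using eigD[OF eSc] sgnc_swap by simp
    qed simp
    also have "\<dots> = - ((real q - 1) * T xs)"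
    proof -
      have "card (Sc - {i}) = q - 1" using i fSc cSc by simp
      moreover have "q \<ge> 1" using i fSc cSc by (metis card_0_eq empty_iff less_one not_le)
      ultimately show ?thesis by (simp add: of_nat_diff sum_negf)
    qed
    also have "(\<Sum>j\<in>S. ?f i j) = (\<Sum>j\<in>S. ?f j i)" by (simp add: transpose_commute)
    finally show ?thesis by simp
  qed
  have "Dop n T xs = (\<Sum>i\<in>S. \<Sum>j\<in>{0..<n}-{i}. ?f i j) + (\<Sum>i\<in>Sc. \<Sum>j\<in>{0..<n}-{i}. ?f i j)"
    unfolding Dop_def using U fS fSc by (simp add: sum.union_disjoint)
  also have "(\<Sum>i\<in>S. \<Sum>j\<in>{0..<n}-{i}. ?f i j) = (\<Sum>i\<in>S. (real k - 1) * T xs + (\<Sum>j\<in>Sc. ?f i j))"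
    by (rule sum.cong) (simp_all add: inS)
  also have "\<dots> = real k * ((real k - 1) * T xs) + Xg xs"
    unfolding Xg_def by (simp add: sum.distrib cS)
  also have "(\<Sum>i\<in>Sc. \<Sum>j\<in>{0..<n}-{i}. ?f i j) = (\<Sum>i\<in>Sc. (\<Sum>j\<in>S. ?f j i) - (real q - 1) * T xs)"
    by (rule sum.cong) (simp_all add: inSc)
  also have "\<dots> = Xg xs - real q * ((real q - 1) * T xs)"
    unfolding Xg_def by (simp add: sum_subtractf cSc sum.swap[of _ Sc S])
  finally show "Dop n T xs = \<kappa> * T xs + 2 * Xg xs" unfolding \<kappa>_def by (simp add: algebra_simps)
qed

end




lemma Dop_add: "Dop n (\<lambda>xs. a xs + b xs) = (\<lambda>xs. Dop n a xs + Dop n b xs)"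
  unfolding Dop_def act_def by (simp add: sum.distrib)

lemma Dop_scale: "Dop n (\<lambda>xs. c * a xs) = (\<lambda>xs. c * Dop n a xs)"
  unfolding Dop_def act_def by (simp add: sum_distrib_left)

lemma Lop_add: "Lop n \<alpha> \<beta> (\<lambda>xs. a xs + b xs) = (\<lambda>xs. Lop n \<alpha> \<beta> a xs + Lop n \<alpha> \<beta> b xs)"
  unfolding Lop_def Dop_add by (simp add: algebra_simps)

lemma Lop_scale: "Lop n \<alpha> \<beta> (\<lambda>xs. c * a xs) = (\<lambda>xs. c * Lop n \<alpha> \<beta> a xs)"
  unfolding Lop_def Dop_scale by (simp add: algebra_simps)

lemma trn_perm: "i \<in> {0..<n} \<Longrightarrow> j \<in> {0..<n} \<Longrightarrow> Transposition.transpose i j permutes {0..<n}"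
  by (rule permutes_swap_id)

lemma Dop_tp: "d \<in> tensor_power n \<Longrightarrow> Dop n d \<in> tensor_power n"
  unfolding Dop_def by (intro tp_sum tp_act trn_perm) auto

lemma Lop_tp: "d \<in> tensor_power n \<Longrightarrow> Lop n \<alpha> \<beta> d \<in> tensor_power n"
  unfolding Lop_def by (intro tp_add tp_scale Dop_tp)

lemma tq_sum_le:
  assumes "finite I" "\<And>i. i \<in> I \<Longrightarrow> F i \<in> tensor_power n"
  shows "tq n (\<lambda>xs. \<Sum>i\<in>I. F i xs) \<le> 2 ^ card I * (\<Sum>i\<in>I. tq n (F i))"
  using assms
proof (induction I rule: finite_induct)
  case empty then show ?case by (simp add: tq_zero)
next
  case (insert x I)
  have Fx: "F x \<in> tensor_power n" using insert by simp
  have FI: "(\<lambda>xs. \<Sum>i\<in>I. F i xs) \<in> tensor_power n" using insert by (intro tp_sum) auto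
  have IH: "tq n (\<lambda>xs. \<Sum>i\<in>I. F i xs) \<le> 2 ^ card I * (\<Sum>i\<in>I. tq n (F i))" using insert by simp
  have s0: "0 \<le> (\<Sum>i\<in>I. tq n (F i))" by (intro sum_nonneg tq_nonneg)
  have "tq n (\<lambda>xs. \<Sum>i\<in>insert x I. F i xs) = tq n (\<lambda>xs. F x xs + (\<Sum>i\<in>I. F i xs))"
    using insert by simp
  also have "\<dots> \<le> 2 * tq n (F x) + 2 * tq n (\<lambda>xs. \<Sum>i\<in>I. F i xs)" by (rule tq_add_le[OF Fx FI])
  also have "\<dots> \<le> 2 * tq n (F x) + 2 * (2 ^ card I * (\<Sum>i\<in>I. tq n (F i)))" using IH by simp
  also have "\<dots> \<le> 2 ^ Suc (card I) * tq n (F x) + 2 ^ Suc (card I) * (\<Sum>i\<in>I. tq n (F i))"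
  proof -
    have "(2::real) \<le> 2 ^ Suc (card I)" by simp
    hence "2 * tq n (F x) \<le> 2 ^ Suc (card I) * tq n (F x)" using tq_nonneg by (intro mult_right_mono) auto
    thus ?thesis by simp
  qed
  also have "\<dots> = 2 ^ card (insert x I) * (\<Sum>i\<in>insert x I. tq n (F i))"
    using insert by (simp add: algebra_simps)
  finally show ?case .
qed

lemma Dop_bnd: "\<exists>M. \<forall>d\<in>(tensor_power n :: ('a::real_inner list \<Rightarrow> real) set). tq n (Dop n d) \<le> M * tq n d"
proof -
  define J where "J i = {0..<n} - {i}" for i :: nat
  define M where "M = 2 ^ card {0..<n} * (\<Sum>i\<in>{0..<n}. 2 ^ card (J i) * real (card (J i)))"
  have "tq n (Dop n d) \<le> M * tq n d" if d: "d \<in> tensor_power n" for d :: "'a list \<Rightarrow> real"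
  proof -
    have inner_tp: "(\<lambda>xs. \<Sum>j\<in>J i. act (Transposition.transpose i j) d xs) \<in> tensor_power n" if "i \<in> {0..<n}" for i
      unfolding J_def using that by (intro tp_sum tp_act[OF d] trn_perm) auto
    have inner: "tq n (\<lambda>xs. \<Sum>j\<in>J i. act (Transposition.transpose i j) d xs) \<le> 2 ^ card (J i) * real (card (J i)) * tq n d"
      if i: "i \<in> {0..<n}" for i
    proof -
      have "tq n (\<lambda>xs. \<Sum>j\<in>J i. act (Transposition.transpose i j) d xs)
            \<le> 2 ^ card (J i) * (\<Sum>j\<in>J i. tq n (act (Transposition.transpose i j) d))"
        unfolding J_def using i by (intro tq_sum_le tp_act[OF d] trn_perm) auto
      also have "(\<Sum>j\<in>J i. tq n (act (Transposition.transpose i j) d)) = (\<Sum>j\<in>J i. tq n d)"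
        unfolding J_def using i by (intro sum.cong refl tq_act trn_perm) auto
      finally show ?thesis by (simp add: mult.assoc)
    qed
    have "tq n (Dop n d) \<le> 2 ^ card {0..<n} * (\<Sum>i\<in>{0..<n}. tq n (\<lambda>xs. \<Sum>j\<in>J i. act (Transposition.transpose i j) d xs))"
      unfolding Dop_def J_def[symmetric] by (intro tq_sum_le inner_tp) auto
    also have "\<dots> \<le> 2 ^ card {0..<n} * (\<Sum>i\<in>{0..<n}. 2 ^ card (J i) * real (card (J i)) * tq n d)"
      by (intro mult_left_mono sum_mono inner) auto
    also have "\<dots> = M * tq n d" unfolding M_def by (simp add: sum_distrib_right mult.assoc)
    finally show ?thesis .
  qed
  thus ?thesis by blast
qed

lemma Lop_bnd: "\<exists>M. \<forall>d\<in>(tensor_power n :: ('a::real_inner list \<Rightarrow> real) set). tq n (Lop n \<alpha> \<beta> d) \<le> M * tq n d"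
proof -
  obtain M where M: "\<forall>d\<in>(tensor_power n :: ('a::real_inner list \<Rightarrow> real) set). tq n (Dop n d) \<le> M * tq n d" using Dop_bnd by blast
  have "tq n (Lop n \<alpha> \<beta> d) \<le> (2 * \<alpha>\<^sup>2 + 2 * \<beta>\<^sup>2 * M) * tq n d" if d: "d \<in> tensor_power n" for d :: "'a list \<Rightarrow> real"
  proof -
    have "tq n (Lop n \<alpha> \<beta> d) \<le> 2 * tq n (\<lambda>xs. \<alpha> * d xs) + 2 * tq n (\<lambda>xs. \<beta> * Dop n d xs)"
      unfolding Lop_def by (intro tq_add_le tp_scale d Dop_tp)
    also have "\<dots> = 2 * \<alpha>\<^sup>2 * tq n d + 2 * \<beta>\<^sup>2 * tq n (Dop n d)" by (simp add: tq_scale)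
    also have "\<dots> \<le> 2 * \<alpha>\<^sup>2 * tq n d + 2 * \<beta>\<^sup>2 * (M * tq n d)"
      using M[rule_format, OF d] by (intro add_left_mono mult_left_mono) simp_all
    finally show ?thesis by (simp add: algebra_simps)
  qed
  thus ?thesis by blast
qed

lemma cs_Lop:
  assumes X: "X \<subseteq> tensor_power n" and Y: "Y \<subseteq> tensor_power n"
    and gen: "\<And>g. g \<in> X \<Longrightarrow> Lop n \<alpha> \<beta> g \<in> lin_span Y"
    and T: "T \<in> closed_span n X"
  shows "Lop n \<alpha> \<beta> T \<in> closed_span n Y"
proof -
  obtain M where M: "\<forall>d\<in>(tensor_power n :: ('a::real_inner list \<Rightarrow> real) set). tq n (Lop n \<alpha> \<beta> d) \<le> M * tq n d" using Lop_bnd by blast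
  show ?thesis
    by (rule cs_op[OF X Y Lop_add Lop_scale Lop_tp, where M=M]) (use M gen T in auto)
qed




definition kap :: "nat \<Rightarrow> nat \<Rightarrow> real" where
  "kap k q = real k * (real k - 1) - real q * (real q - 1)"
definition aA :: "nat \<Rightarrow> nat \<Rightarrow> nat \<Rightarrow> real" where
  "aA n k q = (real q - kap k q / 2) / real n"
definition bA :: "nat \<Rightarrow> real" where
  "bA n = 1 / (2 * real n)"

lemma genE:
  assumes "g \<in> gen n k"
  obtains S where "g \<in> tensor_power n" "S \<subseteq> {0..<n}" "card S = k" "sym_skew_in n S g"
  using assms unfolding gen_def by blast

lemma act_gen:
  assumes g: "g \<in> gen n k" and \<sigma>: "\<sigma> permutes {0..<n}"
  shows "act \<sigma> g \<in> gen n k"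
proof -
  obtain S where S: "g \<in> tensor_power n" "S \<subseteq> {0..<n}" "card S = k" "sym_skew_in n S g"
    using genE[OF g] by blast
  have "sym_skew_in n (\<sigma> ` S) (act \<sigma> g)" by (rule sym_skew_conj[OF S(1) \<sigma> S(2,4)])
  moreover have "card (\<sigma> ` S) = k" using S(3) card_image[OF permutes_inj_on[OF \<sigma>]] by simp
  moreover have "\<sigma> ` S \<subseteq> {0..<n}" using S(2) permutes_image[OF \<sigma>] by blast
  ultimately show ?thesis using tp_act[OF S(1) \<sigma>] unfolding gen_def by blast
qed

lemma Lop_same:
  assumes g: "g \<in> gen n k"
  shows "Lop n \<alpha> \<beta> g \<in> lin_span (gen n k)"
  unfolding Lop_def Dop_def
  by (intro ls_add ls_scale ls_sum ls_base g act_gen trn_perm) auto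

lemma Lop_up:
  assumes g: "g \<in> gen n k" and nkq: "n = k + q" and n: "0 < n"
  shows "Lop n (aA n k q) (bA n) g \<in> lin_span (gen n (Suc k))"
proof -
  obtain S where S: "g \<in> tensor_power n" "S \<subseteq> {0..<n}" "card S = k" "sym_skew_in n S g"
    using genE[OF g] by blast
  note D = Dop_gen[OF S(1,2,3) nkq S(4)]
  note K = \<kappa>_def[OF S(1,2,3) nkq S(4)]
  note U = sum_ut[OF S(1,2,3) nkq S(4)]
  have eq: "Lop n (aA n k q) (bA n) g = (\<lambda>xs. (1 / real n) * (\<Sum>t\<in>Sc n S. ut S g t xs))"
  proof (rule ext)
    fix xs
    have u: "(\<Sum>t\<in>Sc n S. ut S g t xs) = real q * g xs + Xg n S g xs" using fun_cong[OF U, of xs] by simp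
    have nz: "real n \<noteq> 0" using n by simp
    show "Lop n (aA n k q) (bA n) g xs = (1 / real n) * (\<Sum>t\<in>Sc n S. ut S g t xs)"
      unfolding Lop_def D u aA_def bA_def K kap_def using nz by (simp add: field_simps)
  qed
  show ?thesis unfolding eq
    by (intro ls_scale ls_sum ls_base ut_gen[OF S(1,2,3) nkq S(4)])
qed

lemma Lop_down:
  assumes g: "g \<in> gen n k" and nkq: "n = k + q" and n: "0 < n"
  shows "Lop n (1 - aA n k q) (- bA n) g \<in> lin_span (gen n (k - 1))"
proof -
  obtain S where S: "g \<in> tensor_power n" "S \<subseteq> {0..<n}" "card S = k" "sym_skew_in n S g"
    using genE[OF g] by blast
  note D = Dop_gen[OF S(1,2,3) nkq S(4)]
  note K = \<kappa>_def[OF S(1,2,3) nkq S(4)]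
  note V = sum_vs[OF S(1,2,3) nkq S(4)]
  have eq: "Lop n (1 - aA n k q) (- bA n) g = (\<lambda>xs. (1 / real n) * (\<Sum>s\<in>S. vs n S g s xs))"
  proof (rule ext)
    fix xs
    have v: "(\<Sum>s\<in>S. vs n S g s xs) = real k * g xs - Xg n S g xs" using fun_cong[OF V, of xs] by simp
    have nz: "real n \<noteq> 0" using n by simp
    have nn: "real n = real k + real q" using nkq by simp
    have h1: "aA n k q + bA n * \<kappa> k q = real q / real n"
      unfolding aA_def bA_def K kap_def using nz by (simp add: field_simps)
    have h2: "2 * bA n = 1 / real n" unfolding bA_def using nz by simp
    have "Lop n (1 - aA n k q) (- bA n) g xs = g xs - (aA n k q + bA n * \<kappa> k q) * g xs - (2 * bA n) * Xg n S g xs"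
      unfolding Lop_def D by (simp add: algebra_simps)
    also have "\<dots> = g xs - real q / real n * g xs - Xg n S g xs / real n" unfolding h1 h2 by simp
    also have "\<dots> = (1 / real n) * (real k * g xs - Xg n S g xs)"
    proof -
      have kk: "real k = real n - real q" using nn by simp
      show ?thesis unfolding kk using nz by (simp add: field_simps)
    qed
    finally show "Lop n (1 - aA n k q) (- bA n) g xs = (1 / real n) * (\<Sum>s\<in>S. vs n S g s xs)"
      unfolding v .
  qed
  show ?thesis unfolding eq
    by (intro ls_scale ls_sum ls_base vs_gen[OF S(1,2,3) nkq S(4)])
qed

lemma Lop_sum: "(\<lambda>xs. Lop n \<alpha> \<beta> T xs + Lop n (1 - \<alpha>) (- \<beta>) T xs) = T"
  unfolding Lop_def by (simp add: algebra_simps)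

subsection \<open>Orthogonality\<close>

lemma tinner_sub_left:
  assumes "S \<in> tensor_power n" "T \<in> tensor_power n" "U \<in> tensor_power n"
  shows "tinner n S U = tinner n (\<lambda>xs. S xs - T xs) U + tinner n T U"
proof -
  have "S = (\<lambda>xs. (S xs - T xs) + T xs)" by simp
  hence "tinner n S U = tinner n (\<lambda>xs. (S xs - T xs) + T xs) U" by simp
  also have "\<dots> = tinner n (\<lambda>xs. S xs - T xs) U + tinner n T U"
    by (rule tinner_add_left[OF tp_diff[OF assms(1,2)] assms(2,3)])
  finally show ?thesis .
qed

lemma small_zero:
  assumes "\<And>\<epsilon>. \<epsilon> > 0 \<Longrightarrow> \<bar>x::real\<bar> \<le> \<epsilon>"
  shows "x = 0"
proof (rule ccontr)
  assume "x \<noteq> 0"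
  hence "\<bar>x\<bar> / 2 > 0" by simp
  from assms[OF this] \<open>x \<noteq> 0\<close> show False by simp
qed

lemma approx0:
  assumes X: "X \<subseteq> tensor_power n" and a: "a \<in> closed_span n X" and b: "b \<in> tensor_power n"
    and orth: "\<And>g. g \<in> lin_span X \<Longrightarrow> tinner n g b = 0"
  shows "tinner n a b = 0"
proof (rule small_zero)
  fix \<epsilon> :: real assume e: "\<epsilon> > 0"
  have qb: "0 \<le> tq n b" by (rule tq_nonneg)
  define c where "c = \<epsilon> / (tq n b + 1)"
  have c: "c > 0" unfolding c_def using e qb by simp
  have ce: "c * \<epsilon> > 0" using c e by simp
  obtain g where g: "g \<in> lin_span X" "tq n (\<lambda>xs. a xs - g xs) < c * \<epsilon>"
    using a ce unfolding cs_iff by blast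
  have gtp: "g \<in> tensor_power n" using ls_tp[OF X g(1)] .
  have atp: "a \<in> tensor_power n" using cs_tp[OF a] .
  have "tinner n a b = tinner n (\<lambda>xs. a xs - g xs) b"
    using tinner_sub_left[OF atp gtp b] orth[OF g(1)] by simp
  hence "\<bar>tinner n a b\<bar> \<le> ((1/c) * tq n (\<lambda>xs. a xs - g xs) + tq n b / (1/c)) / 2"
    using tinner_bound[OF tp_diff[OF atp gtp] b, of "1/c"] c by simp
  also have "\<dots> = (tq n (\<lambda>xs. a xs - g xs) / c + c * tq n b) / 2" by simp
  also have "\<dots> \<le> (\<epsilon> + \<epsilon>) / 2"
  proof -
    have "tq n (\<lambda>xs. a xs - g xs) / c < \<epsilon>" using g(2) c by (simp add: divide_less_eq mult.commute)
    moreover have "c * tq n b \<le> \<epsilon>"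
    proof -
      have "c * tq n b = \<epsilon> * (tq n b / (tq n b + 1))" unfolding c_def by simp
      also have "\<dots> \<le> \<epsilon> * 1" using qb e by (intro mult_left_mono) auto
      finally show ?thesis by simp
    qed
    ultimately show ?thesis by simp
  qed
  finally show "\<bar>tinner n a b\<bar> \<le> \<epsilon>" by simp
qed

lemma orth_ls:
  assumes X: "X \<subseteq> tensor_power n" and Y: "Y \<subseteq> tensor_power n"
    and orth: "\<And>g h. g \<in> X \<Longrightarrow> h \<in> Y \<Longrightarrow> tinner n g h = 0"
    and g: "g \<in> lin_span X" and h: "h \<in> lin_span Y"
  shows "tinner n g h = 0"
proof -
  have step1: "tinner n g h' = 0" if h': "h' \<in> Y" for h'
    using g
  proof (induction rule: ls_induct)
    case zero then show ?case by (rule tinner_zero_left)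
  next
    case (step F g' a)
    have Ftp: "F \<in> tensor_power n" using ls_tp[OF X step(1)] .
    have gtp: "g' \<in> tensor_power n" using X step(2) by auto
    have "tinner n (\<lambda>xs. F xs + a * g' xs) h' = tinner n F h' + tinner n (\<lambda>xs. a * g' xs) h'"
      by (rule tinner_add_left[OF Ftp tp_scale[OF gtp] ]) (use Y h' in auto)
    also have "\<dots> = 0" using step(3) orth[OF step(2) h'] tinner_scale_left[of n a g' h'] by simp
    finally show ?case .
  qed
  show ?thesis
    using h
  proof (induction rule: ls_induct)
    case zero then show ?case by (subst tinner_comm) (rule tinner_zero_left)
  next
    case (step F h' a)
    have Ftp: "F \<in> tensor_power n" using ls_tp[OF Y step(1)] .
    have htp: "h' \<in> tensor_power n" using Y step(2) by auto
    have gtp: "g \<in> tensor_power n" using ls_tp[OF X g] .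
    have "tinner n g (\<lambda>xs. F xs + a * h' xs) = tinner n (\<lambda>xs. F xs + a * h' xs) g" by (rule tinner_comm)
    also have "\<dots> = tinner n F g + tinner n (\<lambda>xs. a * h' xs) g"
      by (rule tinner_add_left[OF Ftp tp_scale[OF htp] gtp])
    also have "\<dots> = tinner n g F + a * tinner n g h'"
      by (simp add: tinner_scale_left tinner_comm[of n F g] tinner_comm[of n h' g])
    also have "\<dots> = 0" using step(3) step1[OF step(2)] by simp
    finally show ?case .
  qed
qed

lemma orth_cs:
  assumes X: "X \<subseteq> tensor_power n" and Y: "Y \<subseteq> tensor_power n"
    and orth: "\<And>g h. g \<in> X \<Longrightarrow> h \<in> Y \<Longrightarrow> tinner n g h = 0"
    and a: "a \<in> closed_span n X" and b: "b \<in> closed_span n Y"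
  shows "tinner n a b = 0"
proof -
  have btp: "b \<in> tensor_power n" using cs_tp[OF b] .
  have "tinner n g b = 0" if g: "g \<in> lin_span X" for g
  proof -
    have gtp: "g \<in> tensor_power n" using ls_tp[OF X g] .
    have "tinner n b g = 0"
    proof (rule approx0[OF Y b gtp])
      fix h assume h: "h \<in> lin_span Y"
      have "tinner n g h = 0" by (rule orth_ls[OF X Y orth g h])
      thus "tinner n h g = 0" using tinner_comm[of n h g] by simp
    qed
    thus ?thesis using tinner_comm[of n g b] by simp
  qed
  thus ?thesis by (rule approx0[OF X a btp])
qed

lemma two_elems:
  assumes "2 \<le> card A"
  obtains i j where "i \<in> A" "j \<in> A" "i \<noteq> j"
proof -
  have "A \<noteq> {}" using assms by auto
  then obtain i where i: "i \<in> A" by blast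
  have fin: "finite A" using assms card.infinite by force
  have "A - {i} \<noteq> {}"
  proof
    assume "A - {i} = {}"
    hence "A \<subseteq> {i}" by blast
    hence "card A \<le> 1" using card_mono[of "{i}" A] by simp
    with assms show False by simp
  qed
  then obtain j where "j \<in> A - {i}" by blast
  thus ?thesis using that i by blast
qed

lemma gen_orth:
  assumes nkq: "n = k + q" and k: "1 \<le> k"
    and g: "g \<in> gen n (Suc k)" and h: "h \<in> gen n (k - 1)"
  shows "tinner n g h = 0"
proof -
  obtain S1 where S1: "g \<in> tensor_power n" "S1 \<subseteq> {0..<n}" "card S1 = Suc k" "sym_skew_in n S1 g"
    using genE[OF g] by blast
  obtain S2 where S2: "h \<in> tensor_power n" "S2 \<subseteq> {0..<n}" "card S2 = k - 1" "sym_skew_in n S2 h"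
    using genE[OF h] by blast
  define R where "R = {0..<n} - S2"
  have cR: "card R = q + 1" unfolding R_def using card_Diff_subset[OF finite_subset[OF S2(2)] S2(2)] S2(3) nkq k by simp
  have fin1: "finite S1" using S2(2) S1(2) finite_subset by blast
  have finR: "finite R" unfolding R_def by simp
  have "card (S1 \<union> R) \<le> n" using card_mono[of "{0..<n}" "S1 \<union> R"] S1(2) unfolding R_def by auto
  moreover have "card S1 + card R = card (S1 \<union> R) + card (S1 \<inter> R)" by (rule card_Un_Int[OF fin1 finR])
  ultimately have "2 \<le> card (S1 \<inter> R)" using S1(3) cR nkq k by linarith
  then obtain i j where ij: "i \<in> S1 \<inter> R" "j \<in> S1 \<inter> R" "i \<noteq> j" by (rule two_elems)
  define \<tau> where "\<tau> = Transposition.transpose i j"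
  have \<tau>1: "\<tau> permutes S1" unfolding \<tau>_def using ij by (intro permutes_swap_id) auto
  have \<tau>R: "\<tau> permutes R" unfolding \<tau>_def using ij by (intro permutes_swap_id) auto
  have \<tau>n: "\<tau> permutes {0..<n}" using permutes_subset[OF \<tau>1 S1(2)] .
  have e1: "eig n S1 (\<lambda>_. 1) g" using sym_skew_eig[OF S1(1)] S1(4) by blast
  have e2: "eig n R sgnc h" using sym_skew_eig[OF S2(1)] S2(4) unfolding R_def by blast
  have ag: "act \<tau> g = g" using eigD[OF e1 \<tau>1] by simp
  have ah: "act \<tau> h = (\<lambda>xs. (-1) * h xs)" using eigD[OF e2 \<tau>R] sgnc_swap[OF ij(3)] unfolding \<tau>_def by simp
  have "tinner n g h = tinner n (act \<tau> g) (act \<tau> h)" by (rule tinner_act[OF \<tau>n, of g h, symmetric])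
  also have "\<dots> = tinner n g (\<lambda>xs. (-1) * h xs)" unfolding ag ah ..
  also have "\<dots> = tinner n (\<lambda>xs. (-1) * h xs) g" by (rule tinner_comm)
  also have "\<dots> = (-1) * tinner n h g" by (rule tinner_scale_left)
  also have "tinner n h g = tinner n g h" by (rule tinner_comm)
  finally show ?thesis by simp
qed




lemma gen_full_sub:
  assumes n: "1 \<le> n"
  shows "(gen n n :: ('a::real_inner list \<Rightarrow> real) set) \<subseteq> gen n (n - 1)"
proof
  fix T :: "'a list \<Rightarrow> real" assume "T \<in> gen n n"
  then obtain S where S: "T \<in> tensor_power n" "S \<subseteq> {0..<n}" "card S = n" "sym_skew_in n S T"
    using genE by blast
  have Seq: "S = {0..<n}" using card_subset_eq[OF _ S(2)] S(3) by simp
  define S' where "S' = {0..<n} - {0}"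
  have cS': "card S' = n - 1" unfolding S'_def using n by simp
  have rest: "{0..<n} - S' = {0}" unfolding S'_def using n by auto
  have "sym_skew_in n S' T"
    unfolding sym_skew_in_def
  proof (intro conjI allI impI)
    fix \<sigma> :: "nat \<Rightarrow> nat" and xs :: "'a list" assume \<sigma>: "\<sigma> permutes S'" and l: "length xs = n"
    have "\<sigma> permutes S" unfolding Seq S'_def using permutes_subset[OF \<sigma>] S'_def by auto
    thus "T (permute_list \<sigma> xs) = T xs" using S(4) l unfolding sym_skew_in_def by blast
  next
    fix \<sigma> :: "nat \<Rightarrow> nat" and xs :: "'a list" assume \<sigma>: "\<sigma> permutes {0..<n} - S'" and l: "length xs = n"
    have "\<sigma> = id" using \<sigma> unfolding rest by simp
    thus "T (permute_list \<sigma> xs) = of_int (sign \<sigma>) * T xs" by simp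
  qed
  moreover have "S' \<subseteq> {0..<n}" unfolding S'_def by auto
  ultimately show "T \<in> gen n (n - 1)" using S(1) cS' unfolding gen_def by blast
qed

lemma gen_empty_sub:
  assumes n: "1 \<le> n"
  shows "(gen n 0 :: ('a::real_inner list \<Rightarrow> real) set) \<subseteq> gen n 1"
proof
  fix T :: "'a list \<Rightarrow> real" assume "T \<in> gen n 0"
  then obtain S where S: "T \<in> tensor_power n" "S \<subseteq> {0..<n}" "card S = 0" "sym_skew_in n S T"
    using genE by blast
  have Seq: "S = {}" using S(2,3) finite_subset by fastforce
  have "sym_skew_in n {0} T"
    unfolding sym_skew_in_def
  proof (intro conjI allI impI)
    fix \<sigma> :: "nat \<Rightarrow> nat" and xs :: "'a list" assume \<sigma>: "\<sigma> permutes {0}" and l: "length xs = n"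
    have "\<sigma> = id" using \<sigma> by simp
    thus "T (permute_list \<sigma> xs) = T xs" by simp
  next
    fix \<sigma> :: "nat \<Rightarrow> nat" and xs :: "'a list" assume \<sigma>: "\<sigma> permutes {0..<n} - {0}" and l: "length xs = n"
    have "\<sigma> permutes {0..<n} - S" unfolding Seq using permutes_subset[OF \<sigma>] by auto
    thus "T (permute_list \<sigma> xs) = of_int (sign \<sigma>) * T xs" using S(4) l unfolding sym_skew_in_def by blast
  qed
  moreover have "{0::nat} \<subseteq> {0..<n}" using n by auto
  ultimately show "T \<in> gen n 1" using S(1) unfolding gen_def by force
qed

lemma sumset_I:
  assumes "a \<in> A" "b \<in> B" "T = (\<lambda>xs. a xs + b xs)"
  shows "T \<in> {(\<lambda>xs. a xs + b xs) | a b. a \<in> A \<and> b \<in> B}"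
  using assms by blast

theorem lemma4p2:
  fixes k q :: nat
  assumes "separable_space (euclidean :: ('a::{real_inner, complete_space}) topology)"
    and "k + q \<ge> 1"
  defines "V \<equiv> (sym_skew_space (int k) (int q) :: ('a list \<Rightarrow> real) set)"
    and "A \<equiv> sym_skew_space (int k) (int q) \<inter> sym_skew_space (int k + 1) (int q - 1)"
    and "B \<equiv> sym_skew_space (int k) (int q) \<inter> sym_skew_space (int k - 1) (int q + 1)"
  shows "V = {(\<lambda>xs. a xs + b xs) | a b. a \<in> A \<and> b \<in> B}
         \<and> (\<forall>a\<in>A. \<forall>b\<in>B. tinner (k + q) a b = 0)"
proof -
  define n where "n = k + q"
  have n1: "1 \<le> n" using assms(2) unfolding n_def by simp
  have Vd: "V = closed_span n (gen n k)" unfolding V_def n_def by (rule sss_gen)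
  have Vtp: "gen n k \<subseteq> (tensor_power n :: ('a list \<Rightarrow> real) set)" by (rule gen_tp)
  show ?thesis
  proof (cases "q = 0")
    case q0: True
    have kn: "k = n" using q0 unfolding n_def by simp
    have Ad: "A = V \<inter> {\<lambda>_. 0}" unfolding A_def V_def using q0 by (simp add: sss_neg2)
    have "(sym_skew_space (int k - 1) (int q + 1) :: ('a list \<Rightarrow> real) set) = sym_skew_space (int (k - 1)) (int 1)"
      using q0 n1 kn by (simp add: of_nat_diff)
    also have "\<dots> = closed_span n (gen n (k - 1))" using sss_gen[of "k-1" 1] n1 kn by simp
    finally have Bd: "B = V \<inter> closed_span n (gen n (k - 1))" unfolding B_def V_def by simp
    have VB: "V \<subseteq> closed_span n (gen n (k - 1))"
      unfolding Vd using cs_mono[OF gen_full_sub[OF n1]] kn by simp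
    have z: "(\<lambda>_. 0) \<in> V" unfolding Vd by (rule cs_zero)
    have p1: "V = {(\<lambda>xs. a xs + b xs) | a b. a \<in> A \<and> b \<in> B}"
    proof
      show "V \<subseteq> {(\<lambda>xs. a xs + b xs) | a b. a \<in> A \<and> b \<in> B}"
      proof
        fix T assume T: "T \<in> V"
        have "T = (\<lambda>xs. (\<lambda>_. 0) xs + T xs)" by simp
        moreover have "(\<lambda>_. 0) \<in> A" using z unfolding Ad by simp
        moreover have "T \<in> B" using T VB unfolding Bd by blast
        ultimately show "T \<in> {(\<lambda>xs. a xs + b xs) | a b. a \<in> A \<and> b \<in> B}" by (intro sumset_I)
      qed
      show "{(\<lambda>xs. a xs + b xs) | a b. a \<in> A \<and> b \<in> B} \<subseteq> V"
        unfolding Ad Bd by auto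
    qed
    have p2: "\<forall>a\<in>A. \<forall>b\<in>B. tinner (k + q) a b = 0"
      unfolding Ad by (auto simp: tinner_zero_left)
    show ?thesis using p1 p2 by blast
  next
    case qpos: False
    show ?thesis
    proof (cases "k = 0")
      case k0: True
      have qn: "q = n" using k0 unfolding n_def by simp
      have Bd: "B = V \<inter> {\<lambda>_. 0}" unfolding B_def V_def using k0 by (simp add: sss_neg1)
      have "(sym_skew_space (int k + 1) (int q - 1) :: ('a list \<Rightarrow> real) set) = sym_skew_space (int 1) (int (q - 1))"
        using k0 n1 qn by (simp add: of_nat_diff)
      also have "\<dots> = closed_span n (gen n 1)" using sss_gen[of 1 "q - 1"] n1 qn by simp
      finally have Ad: "A = V \<inter> closed_span n (gen n 1)" unfolding A_def V_def by simp
      have VA: "V \<subseteq> closed_span n (gen n 1)"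
        unfolding Vd using cs_mono[OF gen_empty_sub[OF n1]] k0 by simp
      have z: "(\<lambda>_. 0) \<in> V" unfolding Vd by (rule cs_zero)
      have p1: "V = {(\<lambda>xs. a xs + b xs) | a b. a \<in> A \<and> b \<in> B}"
      proof
        show "V \<subseteq> {(\<lambda>xs. a xs + b xs) | a b. a \<in> A \<and> b \<in> B}"
        proof
          fix T assume T: "T \<in> V"
          have "T = (\<lambda>xs. T xs + (\<lambda>_. 0) xs)" by simp
          moreover have "(\<lambda>_. 0) \<in> B" using z unfolding Bd by simp
          moreover have "T \<in> A" using T VA unfolding Ad by blast
          ultimately show "T \<in> {(\<lambda>xs. a xs + b xs) | a b. a \<in> A \<and> b \<in> B}" by (intro sumset_I)
        qed
        show "{(\<lambda>xs. a xs + b xs) | a b. a \<in> A \<and> b \<in> B} \<subseteq> V"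
          unfolding Ad Bd by auto
      qed
      have p2: "\<forall>a\<in>A. \<forall>b\<in>B. tinner (k + q) a b = 0"
        unfolding Bd using tinner_comm tinner_zero_left by (auto simp: tinner_comm[of _ _ "\<lambda>_. 0"] tinner_zero_left)
      show ?thesis using p1 p2 by blast
    next
      case kpos: False
      have k1: "1 \<le> k" and q1: "1 \<le> q" using kpos qpos by auto
      have "(sym_skew_space (int k + 1) (int q - 1) :: ('a list \<Rightarrow> real) set) = sym_skew_space (int (Suc k)) (int (q - 1))"
        using q1 by (simp add: of_nat_diff add.commute)
      also have "\<dots> = closed_span n (gen n (Suc k))" using sss_gen[of "Suc k" "q - 1"] q1 unfolding n_def by simp
      finally have Ad: "A = V \<inter> closed_span n (gen n (Suc k))" unfolding A_def V_def by simp
      have "(sym_skew_space (int k - 1) (int q + 1) :: ('a list \<Rightarrow> real) set) = sym_skew_space (int (k - 1)) (int (Suc q))"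
        using k1 by (simp add: of_nat_diff add.commute)
      also have "\<dots> = closed_span n (gen n (k - 1))" using sss_gen[of "k - 1" "Suc q"] k1 unfolding n_def by simp
      finally have Bd: "B = V \<inter> closed_span n (gen n (k - 1))" unfolding B_def V_def by simp
      have n0: "0 < n" using n1 by simp
      have nkq: "n = k + q" unfolding n_def ..
      have p1: "V = {(\<lambda>xs. a xs + b xs) | a b. a \<in> A \<and> b \<in> B}"
      proof
        show "V \<subseteq> {(\<lambda>xs. a xs + b xs) | a b. a \<in> A \<and> b \<in> B}"
        proof
          fix T assume T: "T \<in> V"
          hence Tc: "T \<in> closed_span n (gen n k)" unfolding Vd .
          let ?a = "Lop n (aA n k q) (bA n) T"
          let ?b = "Lop n (1 - aA n k q) (- bA n) T"
          have "?a \<in> V" unfolding Vd by (rule cs_Lop[OF gen_tp gen_tp Lop_same Tc])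
          moreover have "?a \<in> closed_span n (gen n (Suc k))"
            by (rule cs_Lop[OF gen_tp gen_tp Lop_up[OF _ nkq n0] Tc])
          moreover have "?b \<in> V" unfolding Vd by (rule cs_Lop[OF gen_tp gen_tp Lop_same Tc])
          moreover have "?b \<in> closed_span n (gen n (k - 1))"
            by (rule cs_Lop[OF gen_tp gen_tp Lop_down[OF _ nkq n0] Tc])
          moreover have "T = (\<lambda>xs. ?a xs + ?b xs)" by (rule Lop_sum[symmetric])
          ultimately show "T \<in> {(\<lambda>xs. a xs + b xs) | a b. a \<in> A \<and> b \<in> B}"
            unfolding Ad Bd by (intro sumset_I) auto
        qed
        show "{(\<lambda>xs. a xs + b xs) | a b. a \<in> A \<and> b \<in> B} \<subseteq> V"
        proof
          fix x assume "x \<in> {(\<lambda>xs. a xs + b xs) | a b. a \<in> A \<and> b \<in> B}"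
          then obtain a b where ab: "x = (\<lambda>xs. a xs + b xs)" "a \<in> V" "b \<in> V" unfolding Ad Bd by blast
          show "x \<in> V" unfolding ab(1) using cs_add[OF Vtp] ab(2,3) unfolding Vd by blast
        qed
      qed
      have p2: "\<forall>a\<in>A. \<forall>b\<in>B. tinner (k + q) a b = 0"
      proof (intro ballI)
        fix a b assume a: "a \<in> A" and b: "b \<in> B"
        have "tinner n a b = 0"
          by (rule orth_cs[OF gen_tp gen_tp gen_orth[OF nkq k1]]) (use a b Ad Bd in auto)
        thus "tinner (k + q) a b = 0" unfolding n_def .
      qed
      show ?thesis using p1 p2 by blast
    qed
  qed
qed



end
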